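(* The set $\{G\in\mathcal G:\ \overline G\text{ is simple, not finitely generated and not locally finite}\}$ is comeager in $\mathcal G$.
   Context: Let $\mathbb N=\{1,2,3,\dots\}$. Equip $\mathbb N^{\mathbb N\times\mathbb N}$ with the product topology of the discrete topology on $\mathbb N$. Let $\mathcal G$ be the subspace consisting of those $A\in\mathbb N^{\mathbb N\times\mathbb N}$ that are the multiplication table of a group on the underlying set $\mathbb N$ whose identity element is $1$. For $G\in\mathcal G$, $\overline G$ denotes the group on $\mathbb N$ with multiplication table $G$. *)

theory Defs
  imports "HOL-Analysis.Analysis" "HOL-Algebra.Coset" "HOL-Algebra.Generated_Groups"
begin

definition Npos :: "nat set" where "Npos = {n. 1 \<le> n}"

text \<open>N^(N x N) with the product of discrete topologies on N. Points are the
  (extensional) functions Npos x Npos -> Npos.\<close>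
definition table_space :: "(nat \<times> nat \<Rightarrow> nat) topology" where
  "table_space = product_topology (\<lambda>_. discrete_topology Npos) (Npos \<times> Npos)"

definition tbl_grp :: "(nat \<times> nat \<Rightarrow> nat) \<Rightarrow> nat monoid" where
  "tbl_grp A = \<lparr>carrier = Npos, mult = (\<lambda>x y. A (x, y)), one = 1\<rparr>"

definition group_tables :: "(nat \<times> nat \<Rightarrow> nat) set" where
  "group_tables = {A \<in> topspace table_space. group (tbl_grp A)}"

definition G_space :: "(nat \<times> nat \<Rightarrow> nat) topology" where
  "G_space = subtopology table_space group_tables"

definition nowhere_dense_in :: "'a topology \<Rightarrow> 'a set \<Rightarrow> bool" where
  "nowhere_dense_in Y S \<longleftrightarrow> S \<subseteq> topspace Y \<and> Y interior_of (Y closure_of S) = {}"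

definition meager_in :: "'a topology \<Rightarrow> 'a set \<Rightarrow> bool" where
  "meager_in Y S \<longleftrightarrow> (\<exists>\<F>. countable \<F> \<and> (\<forall>T\<in>\<F>. nowhere_dense_in Y T) \<and> S \<subseteq> \<Union>\<F>)"

definition comeager_in :: "'a topology \<Rightarrow> 'a set \<Rightarrow> bool" where
  "comeager_in Y S \<longleftrightarrow> S \<subseteq> topspace Y \<and> meager_in Y (topspace Y - S)"

text \<open>Group-theoretic notions (for possibly infinite groups; note the library's
  simple_group locale uses card and so only applies to finite groups).\<close>
definition simple_grp :: "('a, 'b) monoid_scheme \<Rightarrow> bool" where
  "simple_grp G \<longleftrightarrow> carrier G \<noteq> {\<one>\<^bsub>G\<^esub>} \<and>
     (\<forall>H. H \<lhd> G \<longrightarrow> H = {\<one>\<^bsub>G\<^esub>} \<or> H = carrier G)"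

definition finitely_generated_grp :: "('a, 'b) monoid_scheme \<Rightarrow> bool" where
  "finitely_generated_grp G \<longleftrightarrow>
     (\<exists>S. finite S \<and> S \<subseteq> carrier G \<and> generate G S = carrier G)"

definition locally_finite_grp :: "('a, 'b) monoid_scheme \<Rightarrow> bool" where
  "locally_finite_grp G \<longleftrightarrow>
     (\<forall>S. finite S \<and> S \<subseteq> carrier G \<longrightarrow> finite (generate G S))"

end

theory Submission
  imports Defs "HOL-Algebra.Multiplicative_Group" "HOL-Algebra.Bij"
    "HOL-Number_Theory.Number_Theory" "HOL-Analysis.Complex_Transcendental"
begin

lemma topspace_table: "topspace table_space = (\<Pi>\<^sub>E p\<in>Npos \<times> Npos. Npos)"
  by (simp add: table_space_def)

lemma group_tables_sub: "group_tables \<subseteq> topspace table_space"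
  by (auto simp: group_tables_def)

lemma topspace_G: "topspace G_space = group_tables"
  using group_tables_sub by (auto simp: G_space_def)

definition cyl :: "(nat \<times> nat \<Rightarrow> nat) \<Rightarrow> (nat \<times> nat) set \<Rightarrow> (nat \<times> nat \<Rightarrow> nat) set" where
  "cyl B E = {C \<in> topspace table_space. \<forall>p\<in>E. C p = B p}"

lemma cyl_open:
  assumes B: "B \<in> topspace table_space" and E: "finite E"
  shows "openin table_space (cyl B E)"
proof -
  define X where "X = (\<lambda>p. if p \<in> E \<and> p \<in> Npos \<times> Npos then {B p} else Npos)"
  have XN: "X p \<subseteq> Npos" if "p \<in> Npos \<times> Npos" for p
  proof -
    have "B p \<in> Npos" using B that unfolding topspace_table by (rule PiE_mem)
    then show ?thesis by (simp add: X_def)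
  qed
  have "cyl B E = (\<Pi>\<^sub>E p\<in>Npos \<times> Npos. X p)"
  proof (rule subset_antisym; rule subsetI)
    fix C assume C: "C \<in> cyl B E"
    then have C1: "C \<in> (\<Pi>\<^sub>E p\<in>Npos \<times> Npos. Npos)" and C2: "\<forall>p\<in>E. C p = B p"
      unfolding cyl_def topspace_table by auto
    have "C p \<in> X p" if "p \<in> Npos \<times> Npos" for p
    proof (cases "p \<in> E")
      case True then show ?thesis using C2 that by (simp add: X_def)
    next
      case False then show ?thesis using PiE_mem[OF C1 that] by (simp add: X_def)
    qed
    moreover have "C \<in> extensional (Npos \<times> Npos)" using C1 by (simp add: PiE_def)
    ultimately show "C \<in> (\<Pi>\<^sub>E p\<in>Npos \<times> Npos. X p)" by (simp add: PiE_iff)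
  next
    fix C assume C: "C \<in> (\<Pi>\<^sub>E p\<in>Npos \<times> Npos. X p)"
    have "C p \<in> Npos" if "p \<in> Npos \<times> Npos" for p
      using PiE_mem[OF C that] XN[OF that] by blast
    moreover have "C \<in> extensional (Npos \<times> Npos)" using C by (simp add: PiE_def)
    ultimately have "C \<in> topspace table_space"
      unfolding topspace_table by (simp add: PiE_iff)
    moreover have "C p = B p" if "p \<in> E" for p
    proof (cases "p \<in> Npos \<times> Npos")
      case True
      have "C p \<in> X p" using C True by (rule PiE_mem)
      then show ?thesis using True that by (simp add: X_def)
    next
      case False
      have "B p = undefined" using B False unfolding topspace_table by (rule PiE_arb)
      moreover have "C p = undefined" using C False by (rule PiE_arb)
      ultimately show ?thesis by simp
    qed
    ultimately show "C \<in> cyl B E" by (simp add: cyl_def)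
  qed
  moreover have "openin table_space (\<Pi>\<^sub>E p\<in>Npos \<times> Npos. X p)"
    unfolding table_space_def
  proof (rule product_topology_basis)
    fix i
    show "openin (discrete_topology Npos) (X i)"
    proof (cases "i \<in> Npos \<times> Npos")
      case True then show ?thesis using XN by simp
    next
      case False then show ?thesis by (simp add: X_def)
    qed
  next
    show "finite {i. X i \<noteq> topspace (discrete_topology Npos)}"
      by (rule finite_subset[OF _ E]) (auto simp: X_def)
  qed
  ultimately show ?thesis by simp
qed

lemma open_contains_cyl:
  assumes "openin table_space W" "A \<in> W"
  shows "\<exists>D. finite D \<and> cyl A D \<subseteq> W"
proof -
  obtain X where X: "A \<in> (\<Pi>\<^sub>E i\<in>Npos \<times> Npos. X i)"
    "finite {i. X i \<noteq> topspace (discrete_topology Npos)}" "(\<Pi>\<^sub>E i\<in>Npos \<times> Npos. X i) \<subseteq> W"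
    using product_topology_open_contains_basis[OF assms[unfolded table_space_def]] by blast
  define D where "D = {i. X i \<noteq> Npos}"
  have "finite D" using X(2) by (simp add: D_def)
  moreover have "cyl A D \<subseteq> W"
  proof
    fix C assume C: "C \<in> cyl A D"
    then have C1: "C \<in> (\<Pi>\<^sub>E p\<in>Npos \<times> Npos. Npos)" and C2: "\<forall>p\<in>D. C p = A p"
      unfolding cyl_def topspace_table by auto
    have "C i \<in> X i" if i: "i \<in> Npos \<times> Npos" for i
    proof (cases "i \<in> D")
      case True then show ?thesis using C2 PiE_mem[OF X(1) i] by simp
    next
      case False then show ?thesis using PiE_mem[OF C1 i] by (simp add: D_def)
    qed
    moreover have "C \<in> extensional (Npos \<times> Npos)" using C1 by (simp add: PiE_def)
    ultimately have "C \<in> (\<Pi>\<^sub>E i\<in>Npos \<times> Npos. X i)" by (simp add: PiE_iff)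
    then show "C \<in> W" using X(3) by blast
  qed
  ultimately show ?thesis by blast
qed

lemma nd_crit:
  assumes TG: "T \<subseteq> group_tables"
    and H: "\<And>A D. A \<in> group_tables \<Longrightarrow> finite D \<Longrightarrow>
       \<exists>B D'. B \<in> group_tables \<and> (\<forall>p\<in>D. B p = A p) \<and> finite D' \<and>
              (\<forall>C\<in>group_tables. (\<forall>p\<in>D'. C p = B p) \<longrightarrow> C \<notin> T)"
  shows "nowhere_dense_in G_space T"
  unfolding nowhere_dense_in_def
proof (intro conjI)
  show "T \<subseteq> topspace G_space" using TG topspace_G by simp
  show "G_space interior_of (G_space closure_of T) = {}"
  proof (rule ccontr)
    define W where "W = G_space interior_of (G_space closure_of T)"
    assume "G_space interior_of (G_space closure_of T) \<noteq> {}"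
    then obtain A where AW: "A \<in> W" unfolding W_def by blast
    have "openin G_space W" by (simp add: W_def)
    then obtain W' where W': "openin table_space W'" "W = W' \<inter> group_tables"
      unfolding G_space_def openin_subtopology by blast
    have AW': "A \<in> W'" and AG: "A \<in> group_tables" using AW W'(2) by auto
    obtain D where D: "finite D" "cyl A D \<subseteq> W'"
      using open_contains_cyl[OF W'(1) AW'] by blast
    obtain B D' where B: "B \<in> group_tables" "\<forall>p\<in>D. B p = A p" "finite D'"
      "\<forall>C\<in>group_tables. (\<forall>p\<in>D'. C p = B p) \<longrightarrow> C \<notin> T"
      using H[OF AG D(1)] by blast
    have BT: "B \<in> topspace table_space" using B(1) group_tables_sub by blast
    define V where "V = cyl B (D \<union> D') \<inter> group_tables"
    have "openin table_space (cyl B (D \<union> D'))"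
      using cyl_open[OF BT] D(1) B(3) by blast
    then have Vo: "openin G_space V"
      unfolding V_def G_space_def openin_subtopology by blast
    have BV: "B \<in> V" using BT B(1) by (auto simp: V_def cyl_def)
    have VW: "V \<subseteq> W"
    proof
      fix C assume CV: "C \<in> V"
      then have "C \<in> cyl A D" using B(2) by (auto simp: V_def cyl_def)
      then show "C \<in> W" using D(2) W'(2) CV by (auto simp: V_def)
    qed
    have "W \<subseteq> G_space closure_of T" unfolding W_def by (rule interior_of_subset)
    then have "B \<in> G_space closure_of T" using BV VW by blast
    then have "\<exists>y. y \<in> T \<and> y \<in> V"
      using Vo BV unfolding in_closure_of by blast
    then obtain C where C: "C \<in> T" "C \<in> V" by blast
    then have "C \<in> group_tables" "\<forall>p\<in>D'. C p = B p" by (auto simp: V_def cyl_def)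
    then show False using B(4) C(1) by blast
  qed
qed

lemma Npos_infinite: "infinite Npos"
proof -
  have "Npos = {1..}" by (auto simp: Npos_def)
  then show ?thesis using infinite_Ici[of "1::nat"] by simp
qed

lemma tbl_grp_simps [simp]:
  "carrier (tbl_grp A) = Npos" "x \<otimes>\<^bsub>tbl_grp A\<^esub> y = A (x, y)" "\<one>\<^bsub>tbl_grp A\<^esub> = 1"
  by (simp_all add: tbl_grp_def)

lemma one_Npos [simp]: "(1::nat) \<in> Npos" "Suc 0 \<in> Npos" by (simp_all add: Npos_def)

lemma exists_bij_extend:
  assumes "countable S1" "countable S2" "infinite S1" "infinite S2"
  shows "\<exists>h. bij_betw h S2 S1"
proof -
  obtain e1 :: "_ \<Rightarrow> nat" where e1: "bij_betw e1 S1 UNIV" using countableE_infinite assms(1,3) by blast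
  obtain e2 :: "_ \<Rightarrow> nat" where e2: "bij_betw e2 S2 UNIV" using countableE_infinite assms(2,4) by blast
  have "bij_betw (the_inv_into S1 e1 \<circ> e2) S2 S1"
    using bij_betw_trans[OF e2 bij_betw_the_inv_into[OF e1]] .
  then show ?thesis by blast
qed

lemma master:
  fixes Q :: "('q, 'z) monoid_scheme" and j :: "nat \<Rightarrow> 'q"
  assumes AG: "A \<in> group_tables" and Q: "group Q" and cQ: "countable (carrier Q)"
    and j: "j \<in> hom (tbl_grp A) Q" and ij: "inj_on j Npos"
    and F: "finite F" "F \<subseteq> Npos" "1 \<in> F"
  shows "\<exists>B l. B \<in> group_tables \<and> bij_betw l (carrier Q) Npos \<and> (\<forall>n\<in>F. l (j n) = n) \<and>
           l \<one>\<^bsub>Q\<^esub> = 1 \<and>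
           (\<forall>q1\<in>carrier Q. \<forall>q2\<in>carrier Q. B (l q1, l q2) = l (q1 \<otimes>\<^bsub>Q\<^esub> q2))"
proof -
  interpret Q: group Q by (rule Q)
  have GA: "group (tbl_grp A)" using AG by (simp add: group_tables_def)
  interpret jh: group_hom "tbl_grp A" Q j
    using GA Q j by (simp add: group_hom_def group_hom_axioms_def)
  have jN: "j ` Npos \<subseteq> carrier Q" using j by (auto simp: hom_def)
  have j1: "j 1 = \<one>\<^bsub>Q\<^esub>" using jh.hom_one by simp
  define R1 where "R1 = Npos - F"
  define R2 where "R2 = carrier Q - j ` F"
  have infQ: "infinite (carrier Q)"
    using finite_subset[OF jN] finite_imageD[OF _ ij] Npos_infinite by blast
  have "countable R1" by (simp add: R1_def)
  moreover have "countable R2" using cQ by (simp add: R2_def)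
  moreover have "infinite R1" using Npos_infinite F(1) by (simp add: R1_def)
  moreover have "infinite R2" using infQ F(1) by (simp add: R2_def)
  ultimately obtain h where h: "bij_betw h R2 R1" using exists_bij_extend by blast
  define l where "l = (\<lambda>q. if q \<in> j ` F then the_inv_into F j q else h q)"
  have ijF: "inj_on j F" using ij F(2) inj_on_subset by blast
  have b1: "bij_betw l (j ` F) F"
  proof -
    have "bij_betw (the_inv_into F j) (j ` F) F"
      using bij_betw_the_inv_into[OF inj_on_imp_bij_betw[OF ijF]] .
    then show ?thesis by (rule bij_betw_cong[THEN iffD1, rotated]) (simp add: l_def)
  qed
  have b2: "bij_betw l R2 R1"
    using h by (rule bij_betw_cong[THEN iffD1, rotated]) (simp add: l_def R2_def)
  have bl: "bij_betw l (carrier Q) Npos"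
  proof -
    have "bij_betw l (j ` F \<union> R2) (F \<union> R1)"
      by (rule bij_betw_combine[OF b1 b2]) (auto simp: R1_def)
    moreover have "j ` F \<union> R2 = carrier Q" using jN F(2) by (auto simp: R2_def)
    moreover have "F \<union> R1 = Npos" using F(2) by (auto simp: R1_def)
    ultimately show ?thesis by simp
  qed
  have lF: "\<forall>n\<in>F. l (j n) = n"
    by (auto simp: l_def the_inv_into_f_f[OF ijF])
  have l1: "l \<one>\<^bsub>Q\<^esub> = 1" using lF F(3) j1 by force
  define e where "e = inv_into (carrier Q) l"
  have eQ: "e x \<in> carrier Q" if "x \<in> Npos" for x
    using bij_betw_inv_into[OF bl] that unfolding e_def bij_betw_def by blast
  have le: "l (e x) = x" if "x \<in> Npos" for x
    using bij_betw_inv_into_right[OF bl that] by (simp add: e_def)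
  have el: "e (l q) = q" if "q \<in> carrier Q" for q
    using bij_betw_inv_into_left[OF bl that] by (simp add: e_def)
  have lQ: "l q \<in> Npos" if "q \<in> carrier Q" for q
    using bl that unfolding bij_betw_def by blast
  have e1: "e 1 = \<one>\<^bsub>Q\<^esub>" using el[of "\<one>\<^bsub>Q\<^esub>"] l1 by simp
  define B where "B = restrict (\<lambda>(m, n). l (e m \<otimes>\<^bsub>Q\<^esub> e n)) (Npos \<times> Npos)"
  have Bv: "B (x, y) = l (e x \<otimes>\<^bsub>Q\<^esub> e y)" if "x \<in> Npos" "y \<in> Npos" for x y
    using that by (simp add: B_def)
  have BN: "B (x, y) \<in> Npos" if "x \<in> Npos" "y \<in> Npos" for x y
    using that by (simp add: Bv eQ lQ Q.m_closed)
  have Btop: "B \<in> topspace table_space"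
    unfolding table_space_def topspace_product_topology topspace_discrete_topology
  proof -
    have "B \<in> extensional (Npos \<times> Npos)" by (simp add: B_def)
    moreover have "\<forall>p \<in> Npos \<times> Npos. B p \<in> Npos" using BN by auto
    ultimately show "B \<in> (\<Pi>\<^sub>E p\<in>Npos \<times> Npos. Npos)" by (simp add: PiE_iff)
  qed
  have grp: "group (tbl_grp B)"
  proof (rule groupI)
    fix x y assume "x \<in> carrier (tbl_grp B)" "y \<in> carrier (tbl_grp B)"
    then show "x \<otimes>\<^bsub>tbl_grp B\<^esub> y \<in> carrier (tbl_grp B)" by (simp add: BN)
  next
    show "\<one>\<^bsub>tbl_grp B\<^esub> \<in> carrier (tbl_grp B)" by simp
  next
    fix x y z assume "x \<in> carrier (tbl_grp B)" "y \<in> carrier (tbl_grp B)" "z \<in> carrier (tbl_grp B)"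
    then have xyz: "x \<in> Npos" "y \<in> Npos" "z \<in> Npos" by auto
    show "(x \<otimes>\<^bsub>tbl_grp B\<^esub> y) \<otimes>\<^bsub>tbl_grp B\<^esub> z = x \<otimes>\<^bsub>tbl_grp B\<^esub> (y \<otimes>\<^bsub>tbl_grp B\<^esub> z)"
    proof -
      have "B (B (x, y), z) = l (e (B (x, y)) \<otimes>\<^bsub>Q\<^esub> e z)" using xyz BN by (simp add: Bv)
      also have "\<dots> = l ((e x \<otimes>\<^bsub>Q\<^esub> e y) \<otimes>\<^bsub>Q\<^esub> e z)" using xyz by (simp add: Bv el eQ)
      also have "\<dots> = l (e x \<otimes>\<^bsub>Q\<^esub> (e y \<otimes>\<^bsub>Q\<^esub> e z))" using xyz by (simp add: eQ Q.m_assoc)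
      also have "\<dots> = l (e x \<otimes>\<^bsub>Q\<^esub> e (B (y, z)))" using xyz by (simp add: Bv el eQ)
      also have "\<dots> = B (x, B (y, z))" using xyz BN by (simp add: Bv)
      finally show ?thesis by simp
    qed
  next
    fix x assume "x \<in> carrier (tbl_grp B)"
    then have x: "x \<in> Npos" by simp
    show "\<one>\<^bsub>tbl_grp B\<^esub> \<otimes>\<^bsub>tbl_grp B\<^esub> x = x"
      using x e1 by (simp add: Bv eQ le)
  next
    fix x assume "x \<in> carrier (tbl_grp B)"
    then have x: "x \<in> Npos" by simp
    define y where "y = l (inv\<^bsub>Q\<^esub> (e x))"
    have y: "y \<in> Npos" using eQ[OF x] by (simp add: y_def lQ)
    have "B (y, x) = 1"
      using x y eQ[OF x] l1 by (simp add: Bv y_def el)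
    then show "\<exists>y\<in>carrier (tbl_grp B). y \<otimes>\<^bsub>tbl_grp B\<^esub> x = \<one>\<^bsub>tbl_grp B\<^esub>"
      using y by auto
  qed
  have BG: "B \<in> group_tables" using Btop grp by (simp add: group_tables_def)
  have "\<forall>q1\<in>carrier Q. \<forall>q2\<in>carrier Q. B (l q1, l q2) = l (q1 \<otimes>\<^bsub>Q\<^esub> q2)"
    by (simp add: Bv lQ el)
  then show ?thesis using BG bl lF l1 by blast
qed

lemma (in group) foldr_append_mult:
  assumes "set xs \<subseteq> carrier G" "set ys \<subseteq> carrier G"
  shows "foldr (\<lambda>a b. a \<otimes> b) (xs @ ys) \<one> = foldr (\<lambda>a b. a \<otimes> b) xs \<one> \<otimes> foldr (\<lambda>a b. a \<otimes> b) ys \<one>"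
  using assms
proof (induction xs)
  case Nil
  have "foldr (\<lambda>a b. a \<otimes> b) ys \<one> \<in> carrier G" using Nil(2)
    by (induction ys) auto
  then show ?case by simp
next
  case (Cons x xs)
  have c1: "foldr (\<lambda>a b. a \<otimes> b) xs \<one> \<in> carrier G" using Cons(2)
    by (induction xs) auto
  have c2: "foldr (\<lambda>a b. a \<otimes> b) ys \<one> \<in> carrier G" using Cons(3)
    by (induction ys) auto
  show ?case using Cons c1 c2 by (simp add: m_assoc)
qed

lemma (in group) countable_generate:
  assumes "countable X" "X \<subseteq> carrier G"
  shows "countable (generate G X)"
proof -
  define Y where "Y = X \<union> m_inv G ` X"
  have Yc: "Y \<subseteq> carrier G" using assms(2) by (auto simp: Y_def)
  have "generate G X \<subseteq> (\<lambda>xs. foldr (\<lambda>a b. a \<otimes> b) xs \<one>) ` lists Y"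
  proof
    fix x assume "x \<in> generate G X"
    then show "x \<in> (\<lambda>xs. foldr (\<lambda>a b. a \<otimes> b) xs \<one>) ` lists Y"
    proof induction
      case one
      show ?case by (rule image_eqI[where x="[]"]) auto
    next
      case (incl h)
      then have "h \<in> carrier G" using assms(2) by auto
      then show ?case using incl by (intro image_eqI[where x="[h]"]) (auto simp: Y_def)
    next
      case (inv h)
      then have "inv h \<in> carrier G" using assms(2) by auto
      then show ?case using inv by (intro image_eqI[where x="[inv h]"]) (auto simp: Y_def)
    next
      case (eng h1 h2)
      then obtain xs ys where xs: "xs \<in> lists Y" "h1 = foldr (\<lambda>a b. a \<otimes> b) xs \<one>"
        and ys: "ys \<in> lists Y" "h2 = foldr (\<lambda>a b. a \<otimes> b) ys \<one>" by blast
      have "set xs \<subseteq> carrier G" "set ys \<subseteq> carrier G" using xs ys Yc by auto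
      then have "foldr (\<lambda>a b. a \<otimes> b) (xs @ ys) \<one> = h1 \<otimes> h2" unfolding xs(2) ys(2) by (rule foldr_append_mult)
      then have "h1 \<otimes> h2 = foldr (\<lambda>a b. a \<otimes> b) (xs @ ys) \<one>" by simp
      then show ?case using xs ys by (intro image_eqI[where x="xs @ ys"]) auto
    qed
  qed
  moreover have "countable Y" using assms(1) by (simp add: Y_def)
  ultimately show ?thesis by (meson countable_image countable_lists countable_subset)
qed

lemma DirProd_nat_pow:
  "(g, h) [^]\<^bsub>G \<times>\<times> H\<^esub> (n::nat) = (g [^]\<^bsub>G\<^esub> n, h [^]\<^bsub>H\<^esub> n)"
proof (induction n)
  case 0 then show ?case by simp
next
  case (Suc n) then show ?case by (simp only: nat_pow_Suc mult_DirProd)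
qed

lemma DirProd_int_pow:
  assumes "group G" "group H" "g \<in> carrier G" "h \<in> carrier H"
  shows "(g, h) [^]\<^bsub>G \<times>\<times> H\<^esub> (i::int) = (g [^]\<^bsub>G\<^esub> i, h [^]\<^bsub>H\<^esub> i)"
proof -
  interpret G: group G by fact
  interpret H: group H by fact
  show ?thesis
  proof (cases "i < 0")
    case True
    have "(g, h) [^]\<^bsub>G \<times>\<times> H\<^esub> i = inv\<^bsub>G \<times>\<times> H\<^esub> ((g, h) [^]\<^bsub>G \<times>\<times> H\<^esub> (nat (-i)))"
      using True by (simp only: int_pow_def2 if_True)
    also have "\<dots> = inv\<^bsub>G \<times>\<times> H\<^esub> (g [^]\<^bsub>G\<^esub> nat (-i), h [^]\<^bsub>H\<^esub> nat (-i))"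
      by (simp only: DirProd_nat_pow)
    also have "\<dots> = (inv\<^bsub>G\<^esub> (g [^]\<^bsub>G\<^esub> nat (-i)), inv\<^bsub>H\<^esub> (h [^]\<^bsub>H\<^esub> nat (-i)))"
      by (rule inv_DirProd) (use assms in auto)
    also have "\<dots> = (g [^]\<^bsub>G\<^esub> i, h [^]\<^bsub>H\<^esub> i)" using True by (simp only: int_pow_def2 if_True)
    finally show ?thesis .
  next
    case False
    have "(g, h) [^]\<^bsub>G \<times>\<times> H\<^esub> i = (g, h) [^]\<^bsub>G \<times>\<times> H\<^esub> (nat i)"
      using False by (simp only: int_pow_def2 if_False)
    also have "\<dots> = (g [^]\<^bsub>G\<^esub> nat i, h [^]\<^bsub>H\<^esub> nat i)" by (rule DirProd_nat_pow)
    also have "\<dots> = (g [^]\<^bsub>G\<^esub> i, h [^]\<^bsub>H\<^esub> i)" using False by (simp only: int_pow_def2 if_False)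
    finally show ?thesis .
  qed
qed

context group begin

definition orb :: "'a \<Rightarrow> 'a \<Rightarrow> 'a set" where
  "orb u p = (\<lambda>i::int. u [^] i \<otimes> p) ` UNIV"

definition rep :: "'a set \<Rightarrow> 'a" where "rep Ob = (SOME x. x \<in> Ob)"

definition idx :: "'a \<Rightarrow> 'a \<Rightarrow> int" where
  "idx u p = (SOME i. p = u [^] i \<otimes> rep (orb u p))"

definition cmap :: "'a \<Rightarrow> 'a \<Rightarrow> ('a set \<Rightarrow> 'a set) \<Rightarrow> 'a \<Rightarrow> 'a" where
  "cmap u v \<phi> p = v [^] (idx u p) \<otimes> rep (\<phi> (orb u p))"

lemma orb_self: "u \<in> carrier G \<Longrightarrow> p \<in> carrier G \<Longrightarrow> p \<in> orb u p"
  unfolding orb_def by (rule image_eqI[where x=0]) auto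

lemma orb_sub: "u \<in> carrier G \<Longrightarrow> p \<in> carrier G \<Longrightarrow> orb u p \<subseteq> carrier G"
  unfolding orb_def by auto

lemma orb_eq:
  assumes u: "u \<in> carrier G" and p: "p \<in> carrier G" and q: "q \<in> orb u p"
  shows "orb u q = orb u p"
proof -
  obtain i :: int where qi: "q = u [^] i \<otimes> p" using q unfolding orb_def by blast
  have A: "u [^] k \<otimes> q = u [^] (k + i) \<otimes> p" for k :: int
    using u p by (simp add: qi int_pow_mult m_assoc)
  have B: "u [^] k \<otimes> p = u [^] (k - i) \<otimes> q" for k :: int
  proof -
    have "u [^] (k - i) \<otimes> q = (u [^] (k - i) \<otimes> u [^] i) \<otimes> p"
      using u p by (simp add: qi m_assoc)
    also have "u [^] (k - i) \<otimes> u [^] i = u [^] (k - i + i)" by (rule int_pow_mult[symmetric, OF u])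
    finally show ?thesis by simp
  qed
  show ?thesis
  proof (rule subset_antisym; rule subsetI)
    fix x assume "x \<in> orb u q"
    then obtain k :: int where "x = u [^] k \<otimes> q" unfolding orb_def by blast
    then have "x = u [^] (k + i) \<otimes> p" using A by simp
    then show "x \<in> orb u p" unfolding orb_def by blast
  next
    fix x assume "x \<in> orb u p"
    then obtain k :: int where "x = u [^] k \<otimes> p" unfolding orb_def by blast
    then have "x = u [^] (k - i) \<otimes> q" using B by simp
    then show "x \<in> orb u q" unfolding orb_def by blast
  qed
qed

lemma rep_in: "Ob \<noteq> {} \<Longrightarrow> rep Ob \<in> Ob"
  unfolding rep_def by (meson ex_in_conv someI_ex)

lemma pow_cancel_diff:
  assumes "u \<in> carrier G" "x \<in> carrier G" "u [^] (i::int) \<otimes> x = u [^] (j::int) \<otimes> x"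
  shows "u [^] (i - j) = \<one>"
proof -
  have "u [^] i = u [^] j" using assms by simp
  then show ?thesis using assms by (simp add: int_pow_diff)
qed

lemma pow_eq_from_diff:
  assumes "v \<in> carrier G" "v [^] ((i::int) - j) = \<one>"
  shows "v [^] i = v [^] j"
proof -
  have "v [^] i = v [^] (i - j + j)" by simp
  also have "\<dots> = v [^] (i - j) \<otimes> v [^] j" using assms(1) by (rule int_pow_mult)
  finally show ?thesis using assms by simp
qed

lemma idx_spec:
  assumes u: "u \<in> carrier G" and p: "p \<in> carrier G"
  shows "p = u [^] (idx u p) \<otimes> rep (orb u p)"
proof -
  have ne: "orb u p \<noteq> {}" using orb_self[OF u p] by blast
  have r: "rep (orb u p) \<in> orb u p" by (rule rep_in[OF ne])
  have rc: "rep (orb u p) \<in> carrier G" using r orb_sub[OF u p] by blast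
  have "orb u (rep (orb u p)) = orb u p" by (rule orb_eq[OF u p r])
  then have "p \<in> orb u (rep (orb u p))" using orb_self[OF u p] by simp
  then have "\<exists>i::int. p = u [^] i \<otimes> rep (orb u p)" unfolding orb_def by blast
  then show ?thesis unfolding idx_def by (rule someI_ex)
qed

lemma cmap_welldef:
  fixes i :: int
  assumes u: "u \<in> carrier G" and v: "v \<in> carrier G" and p: "p \<in> carrier G"
    and prof: "\<And>i::int. u [^] i = \<one> \<longleftrightarrow> v [^] i = \<one>"
    and pi: "p = u [^] i \<otimes> rep (orb u p)"
  shows "cmap u v \<phi> p = v [^] i \<otimes> rep (\<phi> (orb u p))"
proof -
  have ne: "orb u p \<noteq> {}" using orb_self[OF u p] by blast
  have rc: "rep (orb u p) \<in> carrier G" using rep_in[OF ne] orb_sub[OF u p] by blast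
  have "u [^] (idx u p) \<otimes> rep (orb u p) = u [^] i \<otimes> rep (orb u p)"
    using idx_spec[OF u p] pi by simp
  then have "u [^] (idx u p - i) = \<one>" by (rule pow_cancel_diff[OF u rc])
  then have "v [^] (idx u p - i) = \<one>" using prof by simp
  then have "v [^] (idx u p) = v [^] i" by (rule pow_eq_from_diff[OF v])
  then show ?thesis by (simp add: cmap_def)
qed

lemma cmap_closed:
  assumes u: "u \<in> carrier G" and v: "v \<in> carrier G" and p: "p \<in> carrier G"
    and \<phi>: "bij_betw \<phi> (orb u ` carrier G) (orb v ` carrier G)"
  shows "cmap u v \<phi> p \<in> carrier G" "cmap u v \<phi> p \<in> \<phi> (orb u p)"
    "orb v (cmap u v \<phi> p) = \<phi> (orb u p)" "rep (\<phi> (orb u p)) \<in> carrier G"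
proof -
  have "\<phi> (orb u p) \<in> orb v ` carrier G" using \<phi> p unfolding bij_betw_def by blast
  then obtain q where q: "q \<in> carrier G" "\<phi> (orb u p) = orb v q" by blast
  have ne: "orb v q \<noteq> {}" using orb_self[OF v q(1)] by blast
  have r: "rep (orb v q) \<in> orb v q" by (rule rep_in[OF ne])
  have rc: "rep (orb v q) \<in> carrier G" using r orb_sub[OF v q(1)] by blast
  have eq: "orb v (rep (orb v q)) = orb v q" by (rule orb_eq[OF v q(1) r])
  have cq: "cmap u v \<phi> p = v [^] idx u p \<otimes> rep (orb v q)" by (simp add: cmap_def q(2))
  have mem: "cmap u v \<phi> p \<in> orb v (rep (orb v q))"
    unfolding cq orb_def by blast
  show "cmap u v \<phi> p \<in> carrier G" using mem orb_sub[OF v rc] by blast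
  show "cmap u v \<phi> p \<in> \<phi> (orb u p)" using mem eq q(2) by simp
  show "orb v (cmap u v \<phi> p) = \<phi> (orb u p)"
    using orb_eq[OF v rc mem] eq q(2) by simp
  show "rep (\<phi> (orb u p)) \<in> carrier G" using rc q(2) by simp
qed

lemma cmap_equivariant:
  assumes u: "u \<in> carrier G" and v: "v \<in> carrier G" and p: "p \<in> carrier G"
    and prof: "\<And>i::int. u [^] i = \<one> \<longleftrightarrow> v [^] i = \<one>"
    and \<phi>: "bij_betw \<phi> (orb u ` carrier G) (orb v ` carrier G)"
  shows "cmap u v \<phi> (u \<otimes> p) = v \<otimes> cmap u v \<phi> p"
proof -
  have up: "u \<otimes> p \<in> carrier G" using u p by simp
  have "u \<otimes> p \<in> orb u p" unfolding orb_def using u p by (intro image_eqI[where x=1]) auto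
  then have oeq: "orb u (u \<otimes> p) = orb u p" by (rule orb_eq[OF u p])
  have ne: "orb u p \<noteq> {}" using orb_self[OF u p] by blast
  have rc: "rep (orb u p) \<in> carrier G" using rep_in[OF ne] orb_sub[OF u p] by blast
  have "u \<otimes> p = u [^] (1 + idx u p) \<otimes> rep (orb u (u \<otimes> p))"
  proof -
    have "u \<otimes> p = u \<otimes> (u [^] (idx u p) \<otimes> rep (orb u p))"
      using idx_spec[OF u p] by simp
    also have "\<dots> = u [^] (1 + idx u p) \<otimes> rep (orb u p)"
      using u rc by (simp add: int_pow_mult m_assoc)
    finally show ?thesis using oeq by simp
  qed
  then have "cmap u v \<phi> (u \<otimes> p) = v [^] (1 + idx u p) \<otimes> rep (\<phi> (orb u (u \<otimes> p)))"
    by (rule cmap_welldef[OF u v up prof])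
  also have "\<dots> = v \<otimes> (v [^] (idx u p) \<otimes> rep (\<phi> (orb u p)))"
  proof -
    have "rep (\<phi> (orb u p)) \<in> carrier G" by (rule cmap_closed(4)[OF u v p \<phi>])
    then show ?thesis using v oeq by (simp add: int_pow_mult m_assoc)
  qed
  finally show ?thesis by (simp add: cmap_def)
qed

lemma cmap_inverse:
  assumes u: "u \<in> carrier G" and v: "v \<in> carrier G" and p: "p \<in> carrier G"
    and prof: "\<And>i::int. u [^] i = \<one> \<longleftrightarrow> v [^] i = \<one>"
    and \<phi>: "bij_betw \<phi> (orb u ` carrier G) (orb v ` carrier G)"
    and \<psi>: "\<And>Ob. Ob \<in> orb u ` carrier G \<Longrightarrow> \<psi> (\<phi> Ob) = Ob"
  shows "cmap v u \<psi> (cmap u v \<phi> p) = p"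
proof -
  define q where "q = cmap u v \<phi> p"
  have qc: "q \<in> carrier G" unfolding q_def by (rule cmap_closed(1)[OF u v p \<phi>])
  have oq: "orb v q = \<phi> (orb u p)" unfolding q_def by (rule cmap_closed(3)[OF u v p \<phi>])
  have "q = v [^] (idx u p) \<otimes> rep (\<phi> (orb u p))" unfolding q_def cmap_def ..
  then have qq: "q = v [^] (idx u p) \<otimes> rep (orb v q)" unfolding oq .
  have "cmap v u \<psi> q = u [^] (idx u p) \<otimes> rep (\<psi> (orb v q))"
  proof -
    have prof': "\<And>i::int. v [^] i = \<one> \<longleftrightarrow> u [^] i = \<one>" using prof by simp
    show ?thesis by (rule cmap_welldef[OF v u qc prof' qq])
  qed
  also have "\<dots> = u [^] (idx u p) \<otimes> rep (orb u p)" using oq \<psi> p by simp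
  also have "\<dots> = p" using idx_spec[OF u p] by simp
  finally show ?thesis by (simp add: q_def)
qed

lemma conj_bij:
  assumes cG: "countable (carrier G)" and u: "u \<in> carrier G" and v: "v \<in> carrier G"
    and prof: "\<And>i::int. u [^] i = \<one> \<longleftrightarrow> v [^] i = \<one>"
    and iu: "infinite (orb u ` carrier G)" and iv: "infinite (orb v ` carrier G)"
  shows "\<exists>g. bij_betw g (carrier G) (carrier G) \<and> (\<forall>p\<in>carrier G. g (u \<otimes> p) = v \<otimes> g p)"
proof -
  obtain e1 :: "_ \<Rightarrow> nat" where e1: "bij_betw e1 (orb v ` carrier G) UNIV"
    using countableE_infinite[OF countable_image[OF cG] iv] by blast
  obtain e2 :: "_ \<Rightarrow> nat" where e2: "bij_betw e2 (orb u ` carrier G) UNIV"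
    using countableE_infinite[OF countable_image[OF cG] iu] by blast
  define \<phi> where "\<phi> = the_inv_into (orb v ` carrier G) e1 \<circ> e2"
  have \<phi>: "bij_betw \<phi> (orb u ` carrier G) (orb v ` carrier G)"
    unfolding \<phi>_def using bij_betw_trans[OF e2 bij_betw_the_inv_into[OF e1]] .
  define \<psi> where "\<psi> = inv_into (orb u ` carrier G) \<phi>"
  have \<psi>: "bij_betw \<psi> (orb v ` carrier G) (orb u ` carrier G)"
    unfolding \<psi>_def by (rule bij_betw_inv_into[OF \<phi>])
  have \<psi>\<phi>: "\<psi> (\<phi> Ob) = Ob" if "Ob \<in> orb u ` carrier G" for Ob
    unfolding \<psi>_def using bij_betw_inv_into_left[OF \<phi> that] .
  have \<phi>\<psi>: "\<phi> (\<psi> Ob) = Ob" if "Ob \<in> orb v ` carrier G" for Ob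
    unfolding \<psi>_def using bij_betw_inv_into_right[OF \<phi> that] .
  have prof': "\<And>i::int. v [^] i = \<one> \<longleftrightarrow> u [^] i = \<one>" using prof by simp
  have "bij_betw (cmap u v \<phi>) (carrier G) (carrier G)"
  proof (rule bij_betw_byWitness[where f'="cmap v u \<psi>"])
    show "\<forall>a\<in>carrier G. cmap v u \<psi> (cmap u v \<phi> a) = a"
      using cmap_inverse[OF u v _ prof \<phi> \<psi>\<phi>] by blast
    show "\<forall>a\<in>carrier G. cmap u v \<phi> (cmap v u \<psi> a) = a"
      using cmap_inverse[OF v u _ prof' \<psi> \<phi>\<psi>] by blast
    show "cmap u v \<phi> ` carrier G \<subseteq> carrier G"
      using cmap_closed(1)[OF u v _ \<phi>] by blast
    show "cmap v u \<psi> ` carrier G \<subseteq> carrier G"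
      using cmap_closed(1)[OF v u _ \<psi>] by blast
  qed
  moreover have "\<forall>p\<in>carrier G. cmap u v \<phi> (u \<otimes> p) = v \<otimes> cmap u v \<phi> p"
    using cmap_equivariant[OF u v _ prof \<phi>] by blast
  ultimately show ?thesis by blast
qed

end

definition Lm :: "('p, 'z) monoid_scheme \<Rightarrow> 'p \<Rightarrow> 'p \<Rightarrow> 'p" where
  "Lm P p = (\<lambda>x\<in>carrier P. p \<otimes>\<^bsub>P\<^esub> x)"

lemma BijGroup_mult:
  "f \<in> Bij S \<Longrightarrow> g \<in> Bij S \<Longrightarrow> f \<otimes>\<^bsub>BijGroup S\<^esub> g = compose S f g"
  by (simp add: BijGroup_def)

lemma carrier_BijGroup [simp]: "carrier (BijGroup S) = Bij S"
  by (simp add: BijGroup_def)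

lemma (in group) Lm_Bij: "p \<in> carrier G \<Longrightarrow> Lm G p \<in> Bij (carrier G)"
proof -
  assume p: "p \<in> carrier G"
  have "bij_betw (\<lambda>x. p \<otimes> x) (carrier G) (carrier G)"
  proof (rule bij_betw_byWitness[where f'="\<lambda>x. inv p \<otimes> x"])
    show "\<forall>a\<in>carrier G. inv p \<otimes> (p \<otimes> a) = a" using p by (simp add: m_assoc[symmetric])
    show "\<forall>a\<in>carrier G. p \<otimes> (inv p \<otimes> a) = a" using p by (simp add: m_assoc[symmetric])
    show "(\<lambda>x. p \<otimes> x) ` carrier G \<subseteq> carrier G" using p by auto
    show "(\<lambda>x. inv p \<otimes> x) ` carrier G \<subseteq> carrier G" using p by auto
  qed
  then have "bij_betw (Lm G p) (carrier G) (carrier G)"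
    unfolding Lm_def by (rule bij_betw_cong[THEN iffD1, rotated]) simp
  then show ?thesis by (simp add: Bij_def Lm_def)
qed

lemma (in group) Lm_mult:
  assumes "p \<in> carrier G" "q \<in> carrier G"
  shows "Lm G p \<otimes>\<^bsub>BijGroup (carrier G)\<^esub> Lm G q = Lm G (p \<otimes> q)"
  using assms by (simp add: BijGroup_mult Lm_Bij) (auto simp: compose_def Lm_def m_assoc fun_eq_iff)

lemma (in group) Lm_inj: "inj_on (Lm G) (carrier G)"
proof (rule inj_onI)
  fix p q assume pq: "p \<in> carrier G" "q \<in> carrier G" "Lm G p = Lm G q"
  then have "Lm G p \<one> = Lm G q \<one>" by simp
  then show "p = q" using pq by (simp add: Lm_def)
qed

lemma perm_ext:
  fixes P :: "('p, 'z) monoid_scheme"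
  assumes P: "group P" and cP: "countable (carrier P)" and cPrs: "countable Prs"
    and Prs: "\<And>u v. (u, v) \<in> Prs \<Longrightarrow> u \<in> carrier P \<and> v \<in> carrier P \<and>
        (\<forall>i::int. u [^]\<^bsub>P\<^esub> i = \<one>\<^bsub>P\<^esub> \<longleftrightarrow> v [^]\<^bsub>P\<^esub> i = \<one>\<^bsub>P\<^esub>) \<and>
        infinite (group.orb P u ` carrier P) \<and> infinite (group.orb P v ` carrier P)"
  shows "\<exists>(Q :: ('p \<Rightarrow> 'p) monoid) \<Lambda>. group Q \<and> countable (carrier Q) \<and> \<Lambda> \<in> hom P Q \<and>
      inj_on \<Lambda> (carrier P) \<and>
      (\<forall>u v. (u, v) \<in> Prs \<longrightarrow> (\<exists>g\<in>carrier Q. g \<otimes>\<^bsub>Q\<^esub> \<Lambda> u \<otimes>\<^bsub>Q\<^esub> inv\<^bsub>Q\<^esub> g = \<Lambda> v))"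
proof -
  interpret P: group P by (rule P)
  define S where "S = carrier P"
  define BG where "BG = BijGroup S"
  interpret BG: group BG unfolding BG_def by (rule group_BijGroup)
  define gf where "gf = (\<lambda>(u, v). restrict (SOME g. bij_betw g S S \<and> (\<forall>p\<in>S. g (u \<otimes>\<^bsub>P\<^esub> p) = v \<otimes>\<^bsub>P\<^esub> g p)) S)"
  have gf: "gf (u, v) \<in> Bij S \<and> gf (u, v) \<otimes>\<^bsub>BG\<^esub> Lm P u = Lm P v \<otimes>\<^bsub>BG\<^esub> gf (u, v)"
    if uv: "(u, v) \<in> Prs" for u v
  proof -
    have "\<exists>g. bij_betw g S S \<and> (\<forall>p\<in>S. g (u \<otimes>\<^bsub>P\<^esub> p) = v \<otimes>\<^bsub>P\<^esub> g p)"
      unfolding S_def using P.conj_bij[OF cP] Prs[OF uv] by blast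
    then have g: "bij_betw (SOME g. bij_betw g S S \<and> (\<forall>p\<in>S. g (u \<otimes>\<^bsub>P\<^esub> p) = v \<otimes>\<^bsub>P\<^esub> g p)) S S \<and>
        (\<forall>p\<in>S. (SOME g. bij_betw g S S \<and> (\<forall>p\<in>S. g (u \<otimes>\<^bsub>P\<^esub> p) = v \<otimes>\<^bsub>P\<^esub> g p)) (u \<otimes>\<^bsub>P\<^esub> p)
           = v \<otimes>\<^bsub>P\<^esub> (SOME g. bij_betw g S S \<and> (\<forall>p\<in>S. g (u \<otimes>\<^bsub>P\<^esub> p) = v \<otimes>\<^bsub>P\<^esub> g p)) p)"
      by (rule someI_ex)
    define g0 where "g0 = (SOME g. bij_betw g S S \<and> (\<forall>p\<in>S. g (u \<otimes>\<^bsub>P\<^esub> p) = v \<otimes>\<^bsub>P\<^esub> g p))"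
    have g0: "bij_betw g0 S S" "\<And>p. p \<in> S \<Longrightarrow> g0 (u \<otimes>\<^bsub>P\<^esub> p) = v \<otimes>\<^bsub>P\<^esub> g0 p"
      using g unfolding g0_def by auto
    have gfe: "gf (u, v) = restrict g0 S" by (simp add: gf_def g0_def)
    have gB: "gf (u, v) \<in> Bij S"
      unfolding gfe Bij_def using g0(1) by (simp add: bij_betw_cong[of S "restrict g0 S" g0])
    have uB: "Lm P u \<in> Bij S" "Lm P v \<in> Bij S" using Prs[OF uv] P.Lm_Bij by (auto simp: S_def)
    have "compose S (gf (u, v)) (Lm P u) = compose S (Lm P v) (gf (u, v))"
    proof (rule ext)
      fix x show "compose S (gf (u, v)) (Lm P u) x = compose S (Lm P v) (gf (u, v)) x"
      proof (cases "x \<in> S")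
        case True
        have "g0 x \<in> S" using g0(1) True unfolding bij_betw_def by blast
        then show ?thesis using True Prs[OF uv] g0(2)[OF True]
          by (simp add: compose_def gfe Lm_def S_def)
      next
        case False then show ?thesis by (simp add: compose_def)
      qed
    qed
    then show ?thesis using gB uB by (simp add: BG_def BijGroup_mult)
  qed
  define Gen where "Gen = Lm P ` S \<union> gf ` Prs"
  define Q where "Q = subgroup_generated BG Gen"
  have GenB: "Gen \<subseteq> carrier BG"
    using gf P.Lm_Bij by (auto simp: Gen_def BG_def S_def)
  have cQ: "carrier Q = generate BG Gen"
    using GenB by (simp add: Q_def carrier_subgroup_generated Int_absorb1)
  have grQ: "group Q" unfolding Q_def by simp
  have countQ: "countable (carrier Q)"
    unfolding cQ by (rule BG.countable_generate) (use cP cPrs GenB in \<open>auto simp: Gen_def S_def\<close>)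
  have LQ: "Lm P p \<in> carrier Q" if "p \<in> carrier P" for p
    unfolding cQ using that by (auto intro: generate.incl simp: Gen_def S_def)
  have hom: "Lm P \<in> hom P Q"
  proof (rule homI)
    fix x assume "x \<in> carrier P" then show "Lm P x \<in> carrier Q" by (rule LQ)
  next
    fix x y assume "x \<in> carrier P" "y \<in> carrier P"
    then show "Lm P (x \<otimes>\<^bsub>P\<^esub> y) = Lm P x \<otimes>\<^bsub>Q\<^esub> Lm P y"
      by (simp add: Q_def BG_def S_def P.Lm_mult)
  qed
  have conj: "\<exists>g\<in>carrier Q. g \<otimes>\<^bsub>Q\<^esub> Lm P u \<otimes>\<^bsub>Q\<^esub> inv\<^bsub>Q\<^esub> g = Lm P v" if uv: "(u, v) \<in> Prs" for u v
  proof -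
    have gQ: "gf (u, v) \<in> carrier Q" unfolding cQ using uv by (auto intro: generate.incl simp: Gen_def)
    have gBG: "gf (u, v) \<in> carrier BG" using gf[OF uv] by (simp add: BG_def)
    have uBG: "Lm P u \<in> carrier BG" "Lm P v \<in> carrier BG"
      using Prs[OF uv] P.Lm_Bij by (auto simp: BG_def S_def)
    have "inv\<^bsub>Q\<^esub> gf (u, v) = inv\<^bsub>BG\<^esub> gf (u, v)"
      using gQ by (simp add: Q_def)
    then have "gf (u, v) \<otimes>\<^bsub>Q\<^esub> Lm P u \<otimes>\<^bsub>Q\<^esub> inv\<^bsub>Q\<^esub> gf (u, v) =
        gf (u, v) \<otimes>\<^bsub>BG\<^esub> Lm P u \<otimes>\<^bsub>BG\<^esub> inv\<^bsub>BG\<^esub> gf (u, v)"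
      by (simp add: Q_def)
    also have "\<dots> = Lm P v \<otimes>\<^bsub>BG\<^esub> gf (u, v) \<otimes>\<^bsub>BG\<^esub> inv\<^bsub>BG\<^esub> gf (u, v)"
      using gf[OF uv] by simp
    also have "\<dots> = Lm P v" using gBG uBG by (simp add: BG.m_assoc)
    finally show ?thesis using gQ by blast
  qed
  show ?thesis using grQ countQ hom P.Lm_inj conj by blast
qed

definition Aff :: "(complex \<times> complex) monoid" where
  "Aff = \<lparr>carrier = {p. fst p \<noteq> 0}, mult = (\<lambda>x y. (fst x * fst y, fst x * snd y + snd x)), one = (1, 0)\<rparr>"

lemma Aff_simps [simp]:
  "carrier Aff = {p. fst p \<noteq> 0}" "x \<otimes>\<^bsub>Aff\<^esub> y = (fst x * fst y, fst x * snd y + snd x)"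
  "\<one>\<^bsub>Aff\<^esub> = (1, 0)"
  by (simp_all add: Aff_def)

lemma Aff_group: "group Aff"
proof (rule groupI)
  fix x y z :: "complex \<times> complex"
  assume "x \<in> carrier Aff" "y \<in> carrier Aff" "z \<in> carrier Aff"
  then show "x \<otimes>\<^bsub>Aff\<^esub> y \<otimes>\<^bsub>Aff\<^esub> z = x \<otimes>\<^bsub>Aff\<^esub> (y \<otimes>\<^bsub>Aff\<^esub> z)"
    by (simp add: algebra_simps)
next
  fix x :: "complex \<times> complex" assume x: "x \<in> carrier Aff"
  show "\<exists>y\<in>carrier Aff. y \<otimes>\<^bsub>Aff\<^esub> x = \<one>\<^bsub>Aff\<^esub>"
    using x by (intro bexI[where x="(1 / fst x, - snd x / fst x)"]) (auto simp: field_simps)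
qed auto

interpretation Aff: group Aff by (rule Aff_group)

lemma Aff_inv: "a \<noteq> 0 \<Longrightarrow> inv\<^bsub>Aff\<^esub> (a, b) = (1 / a, - b / a)"
  by (rule Aff.inv_equality) (auto simp: field_simps)

lemma Aff_pow_trans: "(1, b) [^]\<^bsub>Aff\<^esub> (n::nat) = (1, of_nat n * b)"
  by (induction n) (auto simp: algebra_simps)

lemma Aff_pow_scal: "(a, 0) [^]\<^bsub>Aff\<^esub> (n::nat) = (a ^ n, 0)"
  by (induction n) (auto simp: algebra_simps)

lemma Aff_ipow_trans_one:
  assumes "b \<noteq> 0"
  shows "(1, b) [^]\<^bsub>Aff\<^esub> (i::int) = \<one>\<^bsub>Aff\<^esub> \<longleftrightarrow> i = 0"
proof (cases "i < 0")
  case True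
  have "(1, b) [^]\<^bsub>Aff\<^esub> i = inv\<^bsub>Aff\<^esub> ((1, b) [^]\<^bsub>Aff\<^esub> (nat (-i)))"
    using True by (simp only: int_pow_def2 if_True)
  also have "\<dots> = (1, - (of_nat (nat (-i)) * b))" by (simp add: Aff_pow_trans Aff_inv)
  finally show ?thesis using True assms by simp
next
  case False
  have "(1, b) [^]\<^bsub>Aff\<^esub> i = (1, b) [^]\<^bsub>Aff\<^esub> (nat i)"
    using False by (simp only: int_pow_def2 if_False)
  also have "\<dots> = (1, of_nat (nat i) * b)" by (simp add: Aff_pow_trans)
  finally show ?thesis using False assms by simp
qed

lemma Aff_ipow_scal_one:
  assumes "a \<noteq> 0"
  shows "(a, 0) [^]\<^bsub>Aff\<^esub> (i::int) = \<one>\<^bsub>Aff\<^esub> \<longleftrightarrow> a ^ nat \<bar>i\<bar> = 1"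
proof (cases "i < 0")
  case True
  have "(a, 0) [^]\<^bsub>Aff\<^esub> i = inv\<^bsub>Aff\<^esub> ((a, 0) [^]\<^bsub>Aff\<^esub> (nat (-i)))"
    using True by (simp only: int_pow_def2 if_True)
  also have "\<dots> = (1 / a ^ nat (-i), 0)" using assms by (simp add: Aff_pow_scal Aff_inv)
  finally show ?thesis using True assms by (auto simp: divide_eq_1_iff)
next
  case False
  have "(a, 0) [^]\<^bsub>Aff\<^esub> i = (a, 0) [^]\<^bsub>Aff\<^esub> (nat i)"
    using False by (simp only: int_pow_def2 if_False)
  also have "\<dots> = (a ^ nat i, 0)" by (simp add: Aff_pow_scal)
  finally show ?thesis using False assms by simp
qed

lemma two_pow_eq_1: "(2::complex) ^ n = 1 \<longleftrightarrow> n = 0"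
proof
  assume "(2::complex) ^ n = 1"
  then have "norm ((2::complex) ^ n) = 1" by simp
  then have "(2::real) ^ n = 1" by (simp add: norm_power)
  then show "n = 0" using one_less_power[of "2::real" n] by (cases "n = 0") auto
qed simp

definition zeta :: "nat \<Rightarrow> complex" where
  "zeta k = (if k = 0 then 2 else exp (2 * pi * \<i> / of_nat k))"

lemma zeta_nonzero: "zeta k \<noteq> 0" by (simp add: zeta_def)

lemma zeta_pow_eq_1: "zeta k ^ m = 1 \<longleftrightarrow> k dvd m"
proof (cases "k = 0")
  case True then show ?thesis by (simp add: zeta_def two_pow_eq_1)
next
  case False
  have "zeta k ^ m = exp (of_nat m * (2 * pi * \<i> / of_nat k))"
    using False by (simp add: zeta_def exp_of_nat_mult[symmetric])
  also have "\<dots> = exp (\<i> * complex_of_real (2 * pi * real m / real k))"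
    by (simp add: field_simps)
  finally have e: "zeta k ^ m = exp (\<i> * complex_of_real (2 * pi * real m / real k))" .
  have "zeta k ^ m = 1 \<longleftrightarrow> (\<exists>n::int. 2 * pi * real m / real k = of_int (2 * n) * pi)"
    unfolding e exp_eq_1 by simp
  also have "\<dots> \<longleftrightarrow> (\<exists>n::int. real m = of_int n * real k)"
    using False by (auto simp: field_simps)
  also have "\<dots> \<longleftrightarrow> k dvd m"
  proof
    assume "\<exists>n::int. real m = of_int n * real k"
    then obtain n :: int where n: "real m = of_int n * real k" by blast
    then have "int m = n * int k" by (metis of_int_eq_iff of_int_mult of_int_of_nat_eq)
    then have "int k dvd int m" by simp
    then show "k dvd m" by simp
  next
    assume "k dvd m" then obtain c where "m = k * c" by blast
    then show "\<exists>n::int. real m = of_int n * real k" by (intro exI[where x="int c"]) simp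
  qed
  finally show ?thesis .
qed

lemma n_dvd_pow2_minus1:
  fixes n :: nat
  assumes n1: "1 < n" and dv: "n dvd 2 ^ n - 1"
  shows False
proof -
  define P where "P = (\<lambda>q::nat. prime q \<and> q dvd n)"
  have exP: "\<exists>q. P q" using prime_factor_nat[of n] n1 by (auto simp: P_def)
  define p where "p = (LEAST q. P q)"
  have Pp: "P p" unfolding p_def using exP by (metis LeastI)
  have pmin: "\<And>q. P q \<Longrightarrow> p \<le> q" unfolding p_def by (rule Least_le)
  have pp: "prime p" and pn: "p dvd n" using Pp by (auto simp: P_def)
  have pd: "p dvd 2 ^ n - 1" using pn dv by (rule dvd_trans)
  have ge: "(2::nat) ^ n \<ge> 1" by simp
  have c1: "[2 ^ n = 1] (mod p)" using cong_altdef_nat[OF ge] pd by simp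
  have p2: "\<not> p dvd 2"
  proof
    assume "p dvd 2"
    then have "p = 2" using pp by (metis prime_nat_iff two_is_prime_nat prime_prime_factor_sqrt)
    then have "even (2 ^ n - 1 :: nat)" using pd by simp
    moreover have "odd (2 ^ n - 1 :: nat)" using n1 by simp
    ultimately show False by simp
  qed
  have c2: "[2 ^ (p - 1) = 1] (mod p)" by (rule fermat_theorem[OF pp p2])
  define d where "d = ord p 2"
  have dn: "d dvd n" using c1 ord_divides by (simp add: d_def)
  have dp: "d dvd p - 1" using c2 ord_divides by (simp add: d_def)
  have d0: "d \<noteq> 0"
  proof
    assume "d = 0" then have "n = 0" using dn by simp
    then show False using n1 by simp
  qed
  have d1: "d \<noteq> 1"
  proof
    assume "d = 1"
    then have "[2 ^ 1 = 1] (mod p)" using ord_divides[of 2 1 p] by (simp add: d_def)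
    then have "p dvd 1" using cong_altdef_nat[of 1 2 p] by simp
    then show False using pp by simp
  qed
  obtain q where q: "prime q" "q dvd d" using prime_factor_nat[of d] d1 by blast
  have "P q" using q dn by (auto simp: P_def intro: dvd_trans)
  then have "p \<le> q" by (rule pmin)
  moreover have "q \<le> d" using q d0 by (simp add: dvd_imp_le)
  moreover have "d \<le> p - 1" using dp pp by (metis dvd_imp_le prime_gt_1_nat zero_less_diff)
  moreover have "p \<ge> 1" using prime_gt_1_nat[OF pp] by simp
  ultimately show False by linarith
qed

context group begin

lemma invL: "g \<in> carrier G \<Longrightarrow> a \<in> carrier G \<Longrightarrow> inv g \<otimes> (g \<otimes> a) = a"
  by (simp add: m_assoc[symmetric])

lemma invR: "g \<in> carrier G \<Longrightarrow> a \<in> carrier G \<Longrightarrow> g \<otimes> (inv g \<otimes> a) = a"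
  by (simp add: m_assoc[symmetric])

lemma conj_one:
  assumes g: "g \<in> carrier G" and w: "w \<in> carrier G"
  shows "g \<otimes> w \<otimes> inv g = \<one> \<longleftrightarrow> w = \<one>"
proof
  assume h: "g \<otimes> w \<otimes> inv g = \<one>"
  have "w = inv g \<otimes> (g \<otimes> w \<otimes> inv g) \<otimes> g" using g w by (simp add: m_assoc invL)
  then show "w = \<one>" using h g by simp
qed (use g in simp)

lemma conj_pow:
  assumes g: "g \<in> carrier G" and w: "w \<in> carrier G"
  shows "(g \<otimes> w \<otimes> inv g) [^] (k::nat) = g \<otimes> w [^] k \<otimes> inv g"
proof (induction k)
  case 0 then show ?case using g by simp
next
  case (Suc k)
  have "(g \<otimes> w \<otimes> inv g) [^] Suc k = (g \<otimes> w [^] k \<otimes> inv g) \<otimes> (g \<otimes> w \<otimes> inv g)"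
    using Suc by simp
  also have "\<dots> = g \<otimes> (w [^] k \<otimes> w) \<otimes> inv g"
    using g w by (simp add: m_assoc invL)
  finally show ?case by simp
qed

lemma no_torsion_cert:
  assumes x: "x \<in> carrier G" and y: "y \<in> carrier G" and z: "z \<in> carrier G"
    and r1: "x \<otimes> y = (y \<otimes> y) \<otimes> x" and r2: "y \<otimes> z = z \<otimes> x"
    and y1: "y \<noteq> \<one>" and oy: "ord y \<noteq> 0"
  shows False
proof -
  have yc: "y = z \<otimes> x \<otimes> inv z"
    using r2 x y z by (metis inv_solve_right m_closed)
  have xy: "x \<otimes> y \<otimes> inv x = y [^] (2::nat)"
    using r1 x y by (metis inv_solve_right m_closed nat_pow_Suc nat_pow_0 l_one numeral_2_eq_2)
  have xpow: "x [^] m \<otimes> y \<otimes> inv (x [^] m) = y [^] ((2::nat) ^ m)" for m :: nat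
  proof (induction m)
    case 0 then show ?case using y by simp
  next
    case (Suc m)
    have e1: "x [^] Suc m = x \<otimes> x [^] m" using x by (rule nat_pow_Suc2)
    have e2: "inv (x \<otimes> x [^] m) = inv (x [^] m) \<otimes> inv x" using x by (simp add: inv_mult_group)
    have "x [^] Suc m \<otimes> y \<otimes> inv (x [^] Suc m) = x \<otimes> x [^] m \<otimes> y \<otimes> (inv (x [^] m) \<otimes> inv x)"
      unfolding e1 e2 ..
    also have "\<dots> = x \<otimes> (x [^] m \<otimes> y \<otimes> inv (x [^] m)) \<otimes> inv x"
      using x y by (simp add: m_assoc)
    finally have "x [^] Suc m \<otimes> y \<otimes> inv (x [^] Suc m) = x \<otimes> (x [^] m \<otimes> y \<otimes> inv (x [^] m)) \<otimes> inv x" .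
    also have "\<dots> = x \<otimes> y [^] ((2::nat) ^ m) \<otimes> inv x"
      using Suc by simp
    also have "\<dots> = (x \<otimes> y \<otimes> inv x) [^] ((2::nat) ^ m)"
      using conj_pow[OF x y] by simp
    also have "\<dots> = (y [^] (2::nat)) [^] ((2::nat) ^ m)" using xy by simp
    also have "\<dots> = y [^] ((2::nat) ^ Suc m)"
      using y by (simp add: nat_pow_pow)
    finally show ?case .
  qed
  have oxy: "x [^] k = \<one> \<longleftrightarrow> y [^] k = \<one>" for k :: nat
  proof -
    have "y [^] k = z \<otimes> x [^] k \<otimes> inv z" using conj_pow[OF z x, of k] yc by simp
    then show ?thesis using conj_one[OF z, of "x [^] k"] x by simp
  qed
  define n where "n = ord y"
  have "x [^] n = \<one>" using oxy y by (simp add: n_def)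
  then have "y = y [^] ((2::nat) ^ n)" using xpow[of n] y by simp
  moreover have "y [^] ((2::nat) ^ n) = y [^] ((2::nat) ^ n - 1) \<otimes> y"
  proof -
    have "(2::nat) ^ n = Suc ((2::nat) ^ n - 1)" by simp
    then show ?thesis by (metis nat_pow_Suc)
  qed
  ultimately have "y [^] ((2::nat) ^ n - 1) = \<one>" using y by (metis nat_pow_closed r_cancel_one)
  then have "n dvd 2 ^ n - 1" using pow_eq_id[OF y] by (simp add: n_def)
  moreover have "1 < n" using oy y1 ord_eq_1[OF y] by (simp add: n_def)
  ultimately show False using n_dvd_pow2_minus1 by blast
qed

lemma finite_generate_ord:
  assumes y: "y \<in> carrier G" and f: "finite (generate G {y})"
  shows "ord y \<noteq> 0"
proof
  assume o: "ord y = 0"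
  have "inj (\<lambda>k::nat. y [^] k)"
  proof (rule injI)
    fix a b :: nat assume e: "y [^] a = y [^] b"
    have "y [^] int a = y [^] int b" using e by (simp add: int_pow_int)
    then have "int (ord y) dvd int b - int a" using int_pow_eq[OF y] by blast
    then show "a = b" using o by simp
  qed
  moreover have "range (\<lambda>k::nat. y [^] k) \<subseteq> generate G {y}"
  proof -
    have "y [^] k \<in> generate G {y}" for k :: nat
    proof -
      have "y [^] (int k) \<in> generate G {y}" using generate_pow[OF y] by blast
      then show ?thesis by (simp add: int_pow_int)
    qed
    then show ?thesis by blast
  qed
  ultimately have "infinite (generate G {y})"
    by (meson finite_imageD finite_subset infinite_UNIV_nat)
  then show False using f by simp
qed

end

definition K0 :: "nat \<Rightarrow> (complex \<times> complex) monoid" where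
  "K0 k = subgroup_generated Aff {(zeta k, 0), (1, 1), (2, 0)}"

lemma K0_group: "group (K0 k)"
  unfolding K0_def by (rule Aff.group_subgroup_generated)

lemma K0_carrier: "carrier (K0 k) = generate Aff {(zeta k, 0), (1, 1), (2, 0)}"
proof -
  have "carrier Aff \<inter> {(zeta k, 0), (1, 1), (2, 0)} = {(zeta k, 0), (1, 1), (2, 0)}"
    using zeta_nonzero[of k] by auto
  then show ?thesis by (simp add: K0_def carrier_subgroup_generated)
qed

lemma K0_gens: "(zeta k, 0) \<in> carrier (K0 k)" "(1, 1) \<in> carrier (K0 k)" "(2, 0) \<in> carrier (K0 k)"
  unfolding K0_carrier by (auto intro: generate.incl)

lemma K0_sub: "carrier (K0 k) \<subseteq> carrier Aff"
  unfolding K0_def by (rule Aff.carrier_subgroup_generated_subset)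

lemma K0_countable: "countable (carrier (K0 k))"
  unfolding K0_carrier by (rule Aff.countable_generate) (use zeta_nonzero[of k] in auto)

lemma K0_mult [simp]: "x \<otimes>\<^bsub>K0 k\<^esub> y = x \<otimes>\<^bsub>Aff\<^esub> y"
  by (simp add: K0_def)

lemma K0_one [simp]: "\<one>\<^bsub>K0 k\<^esub> = (1, 0)"
  by (simp add: K0_def)

lemma K0_inv: "x \<in> carrier (K0 k) \<Longrightarrow> inv\<^bsub>K0 k\<^esub> x = inv\<^bsub>Aff\<^esub> x"
  unfolding K0_def by (rule Aff.inv_subgroup_generated) (simp add: K0_def[symmetric])

lemma K0_ipow: "x \<in> carrier (K0 k) \<Longrightarrow> x [^]\<^bsub>K0 k\<^esub> (i::int) = x [^]\<^bsub>Aff\<^esub> i"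
  unfolding K0_def by (rule Aff.int_pow_subgroup_generated) (simp add: K0_def[symmetric])

lemma K0_infinite: "infinite (carrier (K0 k))"
proof -
  interpret K: group "K0 k" by (rule K0_group)
  have "(1, 1) [^]\<^bsub>K0 k\<^esub> n \<in> carrier (K0 k)" for n :: nat
    using K0_gens(2) by simp
  moreover have "(1, 1) [^]\<^bsub>K0 k\<^esub> n = (1, of_nat n)" for n :: nat
    by (simp add: K0_def pow_subgroup_generated Aff_pow_trans)
  ultimately have "range (\<lambda>n::nat. (1::complex, of_nat n :: complex)) \<subseteq> carrier (K0 k)" by auto
  moreover have "inj (\<lambda>n::nat. (1::complex, of_nat n :: complex))" by (rule injI) simp
  ultimately show ?thesis by (meson finite_imageD finite_subset infinite_UNIV_nat)
qed

lemma orbits_inf1: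
  assumes G1: "group G1" and G2: "group G2" and h0: "h0 \<in> carrier G1" and k0: "k0 \<in> carrier G2"
    and pr: "\<And>i::int. k0 [^]\<^bsub>G2\<^esub> i = \<one>\<^bsub>G2\<^esub> \<Longrightarrow> h0 [^]\<^bsub>G1\<^esub> i = \<one>\<^bsub>G1\<^esub>"
    and inf: "infinite (carrier G1)"
  shows "infinite (group.orb (G1 \<times>\<times> G2) (h0, k0) ` carrier (G1 \<times>\<times> G2))"
proof -
  interpret G1: group G1 by (rule G1)
  interpret G2: group G2 by (rule G2)
  interpret P: group "G1 \<times>\<times> G2" by (rule DirProd_group[OF G1 G2])
  define f where "f = (\<lambda>h. P.orb (h0, k0) (h, \<one>\<^bsub>G2\<^esub>))"
  have u: "(h0, k0) \<in> carrier (G1 \<times>\<times> G2)" using h0 k0 by simp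
  have "inj_on f (carrier G1)"
  proof (rule inj_onI)
    fix h h' assume hh: "h \<in> carrier G1" "h' \<in> carrier G1" "f h = f h'"
    have "(h', \<one>\<^bsub>G2\<^esub>) \<in> f h'" unfolding f_def by (rule P.orb_self[OF u]) (use hh in simp)
    then have "(h', \<one>\<^bsub>G2\<^esub>) \<in> f h" using hh by simp
    then obtain i :: int where i: "(h', \<one>\<^bsub>G2\<^esub>) = (h0, k0) [^]\<^bsub>G1 \<times>\<times> G2\<^esub> i \<otimes>\<^bsub>G1 \<times>\<times> G2\<^esub> (h, \<one>\<^bsub>G2\<^esub>)"
      unfolding f_def P.orb_def by blast
    then have "(h', \<one>\<^bsub>G2\<^esub>) = (h0 [^]\<^bsub>G1\<^esub> i \<otimes>\<^bsub>G1\<^esub> h, k0 [^]\<^bsub>G2\<^esub> i)"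
      using DirProd_int_pow[OF G1 G2 h0 k0, of i] k0 by simp
    then have "k0 [^]\<^bsub>G2\<^esub> i = \<one>\<^bsub>G2\<^esub>" "h' = h0 [^]\<^bsub>G1\<^esub> i \<otimes>\<^bsub>G1\<^esub> h" by auto
    then show "h = h'" using pr hh(1) by simp
  qed
  moreover have "f ` carrier G1 \<subseteq> P.orb (h0, k0) ` carrier (G1 \<times>\<times> G2)"
    unfolding f_def by auto
  ultimately show ?thesis using inf by (meson finite_imageD finite_subset)
qed

lemma orbits_inf2:
  assumes G1: "group G1" and G2: "group G2" and h0: "h0 \<in> carrier G1" and k0: "k0 \<in> carrier G2"
    and pr: "\<And>i::int. h0 [^]\<^bsub>G1\<^esub> i = \<one>\<^bsub>G1\<^esub> \<Longrightarrow> k0 [^]\<^bsub>G2\<^esub> i = \<one>\<^bsub>G2\<^esub>"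
    and inf: "infinite (carrier G2)"
  shows "infinite (group.orb (G1 \<times>\<times> G2) (h0, k0) ` carrier (G1 \<times>\<times> G2))"
proof -
  interpret G1: group G1 by (rule G1)
  interpret G2: group G2 by (rule G2)
  interpret P: group "G1 \<times>\<times> G2" by (rule DirProd_group[OF G1 G2])
  define f where "f = (\<lambda>h. P.orb (h0, k0) (\<one>\<^bsub>G1\<^esub>, h))"
  have u: "(h0, k0) \<in> carrier (G1 \<times>\<times> G2)" using h0 k0 by simp
  have "inj_on f (carrier G2)"
  proof (rule inj_onI)
    fix h h' assume hh: "h \<in> carrier G2" "h' \<in> carrier G2" "f h = f h'"
    have "(\<one>\<^bsub>G1\<^esub>, h') \<in> f h'" unfolding f_def by (rule P.orb_self[OF u]) (use hh in simp)
    then have "(\<one>\<^bsub>G1\<^esub>, h') \<in> f h" using hh by simp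
    then obtain i :: int where i: "(\<one>\<^bsub>G1\<^esub>, h') = (h0, k0) [^]\<^bsub>G1 \<times>\<times> G2\<^esub> i \<otimes>\<^bsub>G1 \<times>\<times> G2\<^esub> (\<one>\<^bsub>G1\<^esub>, h)"
      unfolding f_def P.orb_def by blast
    then have "(\<one>\<^bsub>G1\<^esub>, h') = (h0 [^]\<^bsub>G1\<^esub> i, k0 [^]\<^bsub>G2\<^esub> i \<otimes>\<^bsub>G2\<^esub> h)"
      using DirProd_int_pow[OF G1 G2 h0 k0, of i] h0 by simp
    then have "h0 [^]\<^bsub>G1\<^esub> i = \<one>\<^bsub>G1\<^esub>" "h' = k0 [^]\<^bsub>G2\<^esub> i \<otimes>\<^bsub>G2\<^esub> h" by auto
    then show "h = h'" using pr hh(1) by simp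
  qed
  moreover have "f ` carrier G2 \<subseteq> P.orb (h0, k0) ` carrier (G1 \<times>\<times> G2)"
    unfolding f_def by auto
  ultimately show ?thesis using inf by (meson finite_imageD finite_subset)
qed

lemma DirProd_ipow_one:
  assumes "group G1" "group G2" "h \<in> carrier G1" "k \<in> carrier G2"
  shows "(h, k) [^]\<^bsub>G1 \<times>\<times> G2\<^esub> (i::int) = \<one>\<^bsub>G1 \<times>\<times> G2\<^esub> \<longleftrightarrow>
     h [^]\<^bsub>G1\<^esub> i = \<one>\<^bsub>G1\<^esub> \<and> k [^]\<^bsub>G2\<^esub> i = \<one>\<^bsub>G2\<^esub>"
  using DirProd_int_pow[OF assms, of i] by simp


lemma extend:
  fixes Q :: "('q, 'z) monoid_scheme"
  assumes AG: "A \<in> group_tables" and D: "finite D" and Q: "group Q" and cQ: "countable (carrier Q)"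
    and j: "j \<in> hom (tbl_grp A) Q" and ij: "inj_on j Npos" and S0: "finite S0" "S0 \<subseteq> Npos"
  shows "\<exists>B l. B \<in> group_tables \<and> (\<forall>p\<in>D. B p = A p) \<and> bij_betw l (carrier Q) Npos \<and>
           (\<forall>n\<in>S0. l (j n) = n) \<and> l \<one>\<^bsub>Q\<^esub> = 1 \<and>
           (\<forall>q1\<in>carrier Q. \<forall>q2\<in>carrier Q. B (l q1, l q2) = l (q1 \<otimes>\<^bsub>Q\<^esub> q2))"
proof -
  have AT: "A \<in> (\<Pi>\<^sub>E p\<in>Npos \<times> Npos. Npos)"
    using AG group_tables_sub topspace_table by auto
  define D0 where "D0 = D \<inter> (Npos \<times> Npos)"
  define F where "F = insert 1 (S0 \<union> fst ` D0 \<union> snd ` D0 \<union> A ` D0)"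
  have fF: "finite F" using D S0 by (simp add: F_def D0_def)
  have AD0: "A ` D0 \<subseteq> Npos" using AT by (auto simp: D0_def PiE_iff)
  have FN: "F \<subseteq> Npos" using S0 AD0 by (auto simp: F_def D0_def)
  have "1 \<in> F" by (simp add: F_def)
  then obtain B l where B: "B \<in> group_tables" "bij_betw l (carrier Q) Npos" "\<forall>n\<in>F. l (j n) = n"
    "l \<one>\<^bsub>Q\<^esub> = 1" "\<forall>q1\<in>carrier Q. \<forall>q2\<in>carrier Q. B (l q1, l q2) = l (q1 \<otimes>\<^bsub>Q\<^esub> q2)"
    using master[OF AG Q cQ j ij fF FN] by blast
  have BT: "B \<in> (\<Pi>\<^sub>E p\<in>Npos \<times> Npos. Npos)"
    using B(1) group_tables_sub topspace_table by auto
  have jc: "j n \<in> carrier Q" if "n \<in> Npos" for n using j that by (auto simp: hom_def)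
  have "B p = A p" if p: "p \<in> D" for p
  proof (cases "p \<in> Npos \<times> Npos")
    case True
    then obtain n m where nm: "p = (n, m)" "n \<in> Npos" "m \<in> Npos" by blast
    have pD0: "p \<in> D0" using p True by (simp add: D0_def)
    have "n \<in> fst ` D0" using pD0 nm(1) by (metis fst_conv image_eqI)
    moreover have "m \<in> snd ` D0" using pD0 nm(1) by (metis snd_conv image_eqI)
    moreover have "A (n, m) \<in> A ` D0" using pD0 nm(1) by blast
    ultimately have nF: "n \<in> F" "m \<in> F" "A (n, m) \<in> F" unfolding F_def by blast+
    have e1: "B (n, m) = B (l (j n), l (j m))" using nF(1,2) B(3) by metis
    have e2: "B (l (j n), l (j m)) = l (j n \<otimes>\<^bsub>Q\<^esub> j m)" using B(5) jc nm(2,3) by blast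
    have e3: "j n \<otimes>\<^bsub>Q\<^esub> j m = j (A (n, m))"
      using j nm(2,3) unfolding hom_def by simp
    have e4: "l (j (A (n, m))) = A (n, m)" using nF(3) B(3) by blast
    have "B (n, m) = A (n, m)" unfolding e1 e2 e3 e4 ..
    then show ?thesis using nm(1) by simp
  next
    case False
    have "A p = undefined" using AT False by (rule PiE_arb)
    moreover have "B p = undefined" using BT False by (rule PiE_arb)
    ultimately show ?thesis by simp
  qed
  moreover have "\<forall>n\<in>S0. l (j n) = n" using B(3) unfolding F_def by blast
  ultimately show ?thesis using B by blast
qed

lemma table_inv:
  assumes CG: "C \<in> group_tables" and x: "x \<in> Npos" and y: "y \<in> Npos" and e: "C (x, y) = 1"
  shows "inv\<^bsub>tbl_grp C\<^esub> x = y"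
proof -
  interpret G: group "tbl_grp C" using CG by (simp add: group_tables_def)
  have "y \<otimes>\<^bsub>tbl_grp C\<^esub> x = \<one>\<^bsub>tbl_grp C\<^esub>" by (rule G.inv_comm) (use e x y in simp_all)
  then show ?thesis by (rule G.inv_equality) (use x y in simp_all)
qed

lemma cert_conj:
  assumes CG: "C \<in> group_tables" and N: "N \<lhd> tbl_grp C" and Q: "group Q"
    and g: "g \<in> carrier Q" and n: "n \<in> carrier Q" and lQ: "\<And>q. q \<in> carrier Q \<Longrightarrow> l q \<in> Npos"
    and l1: "l \<one>\<^bsub>Q\<^esub> = 1"
    and h1: "C (l g, l n) = l (g \<otimes>\<^bsub>Q\<^esub> n)"
    and h2: "C (l (g \<otimes>\<^bsub>Q\<^esub> n), l (inv\<^bsub>Q\<^esub> g)) = l (g \<otimes>\<^bsub>Q\<^esub> n \<otimes>\<^bsub>Q\<^esub> inv\<^bsub>Q\<^esub> g)"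
    and h3: "C (l g, l (inv\<^bsub>Q\<^esub> g)) = l (g \<otimes>\<^bsub>Q\<^esub> inv\<^bsub>Q\<^esub> g)"
    and ln: "l n \<in> N"
  shows "l (g \<otimes>\<^bsub>Q\<^esub> n \<otimes>\<^bsub>Q\<^esub> inv\<^bsub>Q\<^esub> g) \<in> N"
proof -
  interpret Q: group Q by (rule Q)
  interpret N: normal N "tbl_grp C" by (rule N)
  have ig: "inv\<^bsub>tbl_grp C\<^esub> (l g) = l (inv\<^bsub>Q\<^esub> g)"
    by (rule table_inv[OF CG]) (use h3 g l1 lQ in simp_all)
  have "l g \<otimes>\<^bsub>tbl_grp C\<^esub> l n \<otimes>\<^bsub>tbl_grp C\<^esub> inv\<^bsub>tbl_grp C\<^esub> (l g) \<in> N"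
    by (rule N.inv_op_closed2) (use g lQ ln in simp_all)
  then show ?thesis using ig h1 h2 by simp
qed

lemma cert_inv:
  assumes CG: "C \<in> group_tables" and N: "N \<lhd> tbl_grp C" and Q: "group Q"
    and n: "n \<in> carrier Q" and lQ: "\<And>q. q \<in> carrier Q \<Longrightarrow> l q \<in> Npos"
    and l1: "l \<one>\<^bsub>Q\<^esub> = 1"
    and h3: "C (l n, l (inv\<^bsub>Q\<^esub> n)) = l (n \<otimes>\<^bsub>Q\<^esub> inv\<^bsub>Q\<^esub> n)"
    and ln: "l n \<in> N"
  shows "l (inv\<^bsub>Q\<^esub> n) \<in> N"
proof -
  interpret Q: group Q by (rule Q)
  interpret N: normal N "tbl_grp C" by (rule N)
  have ig: "inv\<^bsub>tbl_grp C\<^esub> (l n) = l (inv\<^bsub>Q\<^esub> n)"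
    by (rule table_inv[OF CG]) (use h3 n l1 lQ in simp_all)
  have "inv\<^bsub>tbl_grp C\<^esub> (l n) \<in> N" using ln by (rule subgroup.m_inv_closed[OF normal_imp_subgroup[OF N]])
  then show ?thesis using ig by simp
qed

lemma cert_mult:
  assumes N: "N \<lhd> tbl_grp C"
    and h: "C (l m, l n) = l (m \<otimes>\<^bsub>Q\<^esub> n)" and lm: "l m \<in> N" and ln: "l n \<in> N"
  shows "l (m \<otimes>\<^bsub>Q\<^esub> n) \<in> N"
proof -
  interpret N: normal N "tbl_grp C" by (rule N)
  have "l m \<otimes>\<^bsub>tbl_grp C\<^esub> l n \<in> N" using lm ln by (rule subgroup.m_closed[OF normal_imp_subgroup[OF N]])
  then show ?thesis using h by simp
qed

lemma H_group: "A \<in> group_tables \<Longrightarrow> group (tbl_grp A)"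
  by (simp add: group_tables_def)

lemma H_infinite: "infinite (carrier (tbl_grp A))"
  using Npos_infinite by simp

lemma countable_Npos: "countable Npos" by simp

lemma lf_setup:
  assumes AG: "A \<in> group_tables"
  shows "\<exists>(Q :: ((nat \<times> (complex \<times> complex)) \<Rightarrow> (nat \<times> (complex \<times> complex))) monoid) j x y z.
    group Q \<and> countable (carrier Q) \<and> j \<in> hom (tbl_grp A) Q \<and> inj_on j Npos \<and>
    x \<in> carrier Q \<and> y \<in> carrier Q \<and> z \<in> carrier Q \<and>
    x \<otimes>\<^bsub>Q\<^esub> y = (y \<otimes>\<^bsub>Q\<^esub> y) \<otimes>\<^bsub>Q\<^esub> x \<and> y \<otimes>\<^bsub>Q\<^esub> z = z \<otimes>\<^bsub>Q\<^esub> x \<and> y \<noteq> \<one>\<^bsub>Q\<^esub> \<and>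
    (\<forall>n\<in>Npos. x \<otimes>\<^bsub>Q\<^esub> j n = j n \<otimes>\<^bsub>Q\<^esub> x) \<and> x \<otimes>\<^bsub>Q\<^esub> y \<noteq> y \<otimes>\<^bsub>Q\<^esub> x"
proof -
  define H where "H = tbl_grp A"
  define K where "K = K0 0"
  define P where "P = H \<times>\<times> K"
  have gH: "group H" using AG by (simp add: H_def H_group)
  interpret H: group H by (rule gH)
  have gK: "group K" by (simp add: K_def K0_group)
  interpret K: group K by (rule gK)
  have gP: "group P" unfolding P_def by (rule DirProd_group[OF gH gK])
  interpret P: group P by (rule gP)
  have cP: "countable (carrier P)" using K0_countable by (simp add: P_def H_def K_def)
  have z0: "zeta 0 = 2" by (simp add: zeta_def)
  have X2: "(2, 0) \<in> carrier K" and T: "(1, 1) \<in> carrier K" using K0_gens by (auto simp: K_def)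
  have H1: "(1::nat) \<in> carrier H" by (simp add: H_def)
  have h1pow: "(1::nat) [^]\<^bsub>tbl_grp A\<^esub> (i::int) = 1" "Suc 0 [^]\<^bsub>tbl_grp A\<^esub> (i::int) = Suc 0" for i
    using H.int_pow_one[of i] by (simp_all add: H_def)
  define u where "u = ((1::nat), ((2::complex), (0::complex)))"
  define v where "v = ((1::nat), ((1::complex), (1::complex)))"
  have uP: "u \<in> carrier P" and vP: "v \<in> carrier P" using X2 T by (auto simp: u_def v_def P_def H_def)
  have pX2: "(2, 0) [^]\<^bsub>K\<^esub> (i::int) = \<one>\<^bsub>K\<^esub> \<longleftrightarrow> i = 0" for i
  proof -
    have "(2, 0) [^]\<^bsub>K\<^esub> i = (2, 0) [^]\<^bsub>Aff\<^esub> i" using X2 by (simp add: K_def K0_ipow)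
    then show ?thesis using Aff_ipow_scal_one[of 2 i] two_pow_eq_1 by (simp add: K_def)
  qed
  have pT: "(1, 1) [^]\<^bsub>K\<^esub> (i::int) = \<one>\<^bsub>K\<^esub> \<longleftrightarrow> i = 0" for i
  proof -
    have "(1, 1) [^]\<^bsub>K\<^esub> i = (1, 1) [^]\<^bsub>Aff\<^esub> i" using T by (simp add: K_def K0_ipow)
    then show ?thesis using Aff_ipow_trans_one[of 1 i] by (simp add: K_def)
  qed
  have pu: "u [^]\<^bsub>P\<^esub> (i::int) = \<one>\<^bsub>P\<^esub> \<longleftrightarrow> i = 0" for i
    unfolding u_def P_def using DirProd_ipow_one[OF gH gK H1 X2, of i] pX2[of i] h1pow
    by (simp add: H_def)
  have pv: "v [^]\<^bsub>P\<^esub> (i::int) = \<one>\<^bsub>P\<^esub> \<longleftrightarrow> i = 0" for i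
    unfolding v_def P_def using DirProd_ipow_one[OF gH gK H1 T, of i] pT[of i] h1pow
    by (simp add: H_def)
  have iu: "infinite (P.orb u ` carrier P)"
    unfolding u_def P_def
    by (rule orbits_inf1[OF gH gK H1 X2]) (use pX2 H_infinite h1pow in \<open>simp_all add: H_def\<close>)
  have iv: "infinite (P.orb v ` carrier P)"
    unfolding v_def P_def
    by (rule orbits_inf1[OF gH gK H1 T]) (use pT H_infinite h1pow in \<open>simp_all add: H_def\<close>)
  obtain Q :: "((nat \<times> (complex \<times> complex)) \<Rightarrow> (nat \<times> (complex \<times> complex))) monoid" and \<Lambda>
    where Q: "group Q" "countable (carrier Q)" "\<Lambda> \<in> hom P Q" "inj_on \<Lambda> (carrier P)"
      "\<forall>u' v'. (u', v') \<in> {(u, v)} \<longrightarrow> (\<exists>g\<in>carrier Q. g \<otimes>\<^bsub>Q\<^esub> \<Lambda> u' \<otimes>\<^bsub>Q\<^esub> inv\<^bsub>Q\<^esub> g = \<Lambda> v')"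
    using perm_ext[OF gP cP, of "{(u, v)}"] uP vP pu pv iu iv by auto
  interpret Q: group Q by (rule Q(1))
  interpret L: group_hom P Q \<Lambda> using gP Q(1,3) by (simp add: group_hom_def group_hom_axioms_def)
  obtain g where g: "g \<in> carrier Q" "g \<otimes>\<^bsub>Q\<^esub> \<Lambda> u \<otimes>\<^bsub>Q\<^esub> inv\<^bsub>Q\<^esub> g = \<Lambda> v" using Q(5) by blast
  define j where "j = (\<lambda>n. \<Lambda> (n, \<one>\<^bsub>K\<^esub>))"
  have inP: "(n, \<one>\<^bsub>K\<^esub>) \<in> carrier P" if "n \<in> Npos" for n using that by (simp add: P_def H_def)
  have jhom: "j \<in> hom (tbl_grp A) Q"
  proof (rule homI)
    fix n assume "n \<in> carrier (tbl_grp A)" then show "j n \<in> carrier Q" using inP by (simp add: j_def)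
  next
    fix n m assume nm: "n \<in> carrier (tbl_grp A)" "m \<in> carrier (tbl_grp A)"
    have "(n \<otimes>\<^bsub>tbl_grp A\<^esub> m, \<one>\<^bsub>K\<^esub>) = (n, \<one>\<^bsub>K\<^esub>) \<otimes>\<^bsub>P\<^esub> (m, \<one>\<^bsub>K\<^esub>)"
      by (simp add: P_def H_def)
    then show "j (n \<otimes>\<^bsub>tbl_grp A\<^esub> m) = j n \<otimes>\<^bsub>Q\<^esub> j m"
      using nm inP by (simp add: j_def)
  qed
  have jinj: "inj_on j Npos"
  proof (rule inj_onI)
    fix n m assume "n \<in> Npos" "m \<in> Npos" "j n = j m"
    then show "n = m" using Q(4) inP unfolding j_def inj_on_def by blast
  qed
  define x where "x = \<Lambda> u"
  define y where "y = \<Lambda> v"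
  have xQ: "x \<in> carrier Q" and yQ: "y \<in> carrier Q" using uP vP by (simp_all add: x_def y_def)
  have r2: "y \<otimes>\<^bsub>Q\<^esub> g = g \<otimes>\<^bsub>Q\<^esub> x"
  proof -
    have "y \<otimes>\<^bsub>Q\<^esub> g = g \<otimes>\<^bsub>Q\<^esub> x \<otimes>\<^bsub>Q\<^esub> inv\<^bsub>Q\<^esub> g \<otimes>\<^bsub>Q\<^esub> g" using g by (simp add: x_def y_def)
    also have "\<dots> = g \<otimes>\<^bsub>Q\<^esub> x" using g(1) xQ by (simp add: Q.m_assoc)
    finally show ?thesis .
  qed
  have Hn1: "A (1, n) = n" "A (n, 1) = n" if "n \<in> Npos" for n
    using H.l_one[of n] H.r_one[of n] that by (simp_all add: H_def)
  have r1: "x \<otimes>\<^bsub>Q\<^esub> y = (y \<otimes>\<^bsub>Q\<^esub> y) \<otimes>\<^bsub>Q\<^esub> x"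
  proof -
    have "u \<otimes>\<^bsub>P\<^esub> v = (v \<otimes>\<^bsub>P\<^esub> v) \<otimes>\<^bsub>P\<^esub> u"
      using Hn1[of 1] by (simp add: u_def v_def P_def H_def K_def)
    then have "\<Lambda> (u \<otimes>\<^bsub>P\<^esub> v) = \<Lambda> ((v \<otimes>\<^bsub>P\<^esub> v) \<otimes>\<^bsub>P\<^esub> u)" by simp
    then show ?thesis using uP vP by (simp add: x_def y_def L.hom_mult)
  qed
  have y1: "y \<noteq> \<one>\<^bsub>Q\<^esub>"
  proof
    assume "y = \<one>\<^bsub>Q\<^esub>"
    then have "\<Lambda> v = \<Lambda> \<one>\<^bsub>P\<^esub>" by (simp add: y_def)
    then have "v = \<one>\<^bsub>P\<^esub>" using Q(4) vP unfolding inj_on_def by blast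
    then show False by (simp add: v_def P_def H_def K_def)
  qed
  have comm: "x \<otimes>\<^bsub>Q\<^esub> j n = j n \<otimes>\<^bsub>Q\<^esub> x" if n: "n \<in> Npos" for n
  proof -
    have "u \<otimes>\<^bsub>P\<^esub> (n, \<one>\<^bsub>K\<^esub>) = (n, \<one>\<^bsub>K\<^esub>) \<otimes>\<^bsub>P\<^esub> u"
      using Hn1[OF n] by (simp add: u_def P_def H_def K_def)
    then have "\<Lambda> (u \<otimes>\<^bsub>P\<^esub> (n, \<one>\<^bsub>K\<^esub>)) = \<Lambda> ((n, \<one>\<^bsub>K\<^esub>) \<otimes>\<^bsub>P\<^esub> u)" by simp
    then show ?thesis using uP inP[OF n] by (simp add: x_def j_def L.hom_mult)
  qed
  have ncomm: "x \<otimes>\<^bsub>Q\<^esub> y \<noteq> y \<otimes>\<^bsub>Q\<^esub> x"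
  proof
    assume "x \<otimes>\<^bsub>Q\<^esub> y = y \<otimes>\<^bsub>Q\<^esub> x"
    then have "\<Lambda> (u \<otimes>\<^bsub>P\<^esub> v) = \<Lambda> (v \<otimes>\<^bsub>P\<^esub> u)" using uP vP by (simp add: x_def y_def)
    then have "u \<otimes>\<^bsub>P\<^esub> v = v \<otimes>\<^bsub>P\<^esub> u" using Q(4) uP vP unfolding inj_on_def by blast
    then show False by (simp add: u_def v_def P_def H_def K_def)
  qed
  show ?thesis
    using Q(1,2) jhom jinj xQ yQ g(1) r1 r2 y1 comm ncomm by blast
qed


lemma simp_setup:
  assumes AG: "A \<in> group_tables" and a: "a \<in> Npos" "a \<noteq> 1" and b: "b \<in> Npos"
  shows "\<exists>(Q :: ((nat \<times> (complex \<times> complex)) \<Rightarrow> (nat \<times> (complex \<times> complex))) monoid) j g0 g1 t.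
    group Q \<and> countable (carrier Q) \<and> j \<in> hom (tbl_grp A) Q \<and> inj_on j Npos \<and>
    g0 \<in> carrier Q \<and> g1 \<in> carrier Q \<and> t \<in> carrier Q \<and>
    j b = (g1 \<otimes>\<^bsub>Q\<^esub> ((g0 \<otimes>\<^bsub>Q\<^esub> j a \<otimes>\<^bsub>Q\<^esub> inv\<^bsub>Q\<^esub> g0) \<otimes>\<^bsub>Q\<^esub>
             (t \<otimes>\<^bsub>Q\<^esub> inv\<^bsub>Q\<^esub> (g0 \<otimes>\<^bsub>Q\<^esub> j a \<otimes>\<^bsub>Q\<^esub> inv\<^bsub>Q\<^esub> g0) \<otimes>\<^bsub>Q\<^esub> inv\<^bsub>Q\<^esub> t))
           \<otimes>\<^bsub>Q\<^esub> inv\<^bsub>Q\<^esub> g1)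
          \<otimes>\<^bsub>Q\<^esub> inv\<^bsub>Q\<^esub> ((g0 \<otimes>\<^bsub>Q\<^esub> j a \<otimes>\<^bsub>Q\<^esub> inv\<^bsub>Q\<^esub> g0) \<otimes>\<^bsub>Q\<^esub>
             (t \<otimes>\<^bsub>Q\<^esub> inv\<^bsub>Q\<^esub> (g0 \<otimes>\<^bsub>Q\<^esub> j a \<otimes>\<^bsub>Q\<^esub> inv\<^bsub>Q\<^esub> g0) \<otimes>\<^bsub>Q\<^esub> inv\<^bsub>Q\<^esub> t))"
proof -
  define H where "H = tbl_grp A"
  have gH: "group H" using AG by (simp add: H_def H_group)
  interpret H: group H by (rule gH)
  define k where "k = H.ord a"
  define K where "K = K0 k"
  define P where "P = H \<times>\<times> K"
  have gK: "group K" by (simp add: K_def K0_group)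
  interpret K: group K by (rule gK)
  have gP: "group P" unfolding P_def by (rule DirProd_group[OF gH gK])
  interpret P: group P by (rule gP)
  have cP: "countable (carrier P)" using K0_countable by (simp add: P_def H_def K_def)
  have aH: "a \<in> carrier H" and bH: "b \<in> carrier H" and H1: "(1::nat) \<in> carrier H"
    using a b by (simp_all add: H_def)
  have H1': "\<one>\<^bsub>H\<^esub> = (1::nat)" by (simp add: H_def)
  have k1: "k \<noteq> 1" using H.ord_eq_1[OF aH] a(2) by (simp add: k_def H1')
  have z1: "zeta k \<noteq> 1" using zeta_pow_eq_1[of k 1] k1 by auto
  have z0: "zeta k \<noteq> 0" by (rule zeta_nonzero)
  define \<rho> where "\<rho> = (zeta k, (0::complex))"
  define T where "T = ((1::complex), (1::complex))"
  have \<rho>K: "\<rho> \<in> carrier K" and TK: "T \<in> carrier K" using K0_gens by (auto simp: K_def \<rho>_def T_def)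
  define c where "c = \<rho> \<otimes>\<^bsub>K\<^esub> T \<otimes>\<^bsub>K\<^esub> inv\<^bsub>K\<^esub> \<rho> \<otimes>\<^bsub>K\<^esub> inv\<^bsub>K\<^esub> T"
  have cK: "c \<in> carrier K" using \<rho>K TK by (simp add: c_def)
  have cval: "c = (1, zeta k - 1)"
  proof -
    have "inv\<^bsub>K\<^esub> \<rho> = (1 / zeta k, 0)" using \<rho>K z0 by (simp add: K_def K0_inv \<rho>_def Aff_inv)
    moreover have "inv\<^bsub>K\<^esub> T = (1, -1)" using TK by (simp add: K_def K0_inv T_def Aff_inv)
    ultimately show ?thesis using z0 by (simp add: c_def K_def \<rho>_def T_def field_simps)
  qed
  have K1: "\<one>\<^bsub>K\<^esub> \<in> carrier K" by simp
  have h1pow: "\<one>\<^bsub>H\<^esub> [^]\<^bsub>H\<^esub> (i::int) = \<one>\<^bsub>H\<^esub>" for i by simp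
  have k1pow: "\<one>\<^bsub>K\<^esub> [^]\<^bsub>K\<^esub> (i::int) = \<one>\<^bsub>K\<^esub>" for i by simp
  have p\<rho>: "\<rho> [^]\<^bsub>K\<^esub> (i::int) = \<one>\<^bsub>K\<^esub> \<longleftrightarrow> int k dvd i" for i
  proof -
    have "\<rho> [^]\<^bsub>K\<^esub> i = \<rho> [^]\<^bsub>Aff\<^esub> i" using \<rho>K by (simp add: K_def K0_ipow)
    then show ?thesis using Aff_ipow_scal_one[OF z0, of i] zeta_pow_eq_1[of k "nat \<bar>i\<bar>"]
      by (simp add: K_def \<rho>_def)
  qed
  have pc: "c [^]\<^bsub>K\<^esub> (i::int) = \<one>\<^bsub>K\<^esub> \<longleftrightarrow> i = 0" for i
  proof -
    have "c [^]\<^bsub>K\<^esub> i = c [^]\<^bsub>Aff\<^esub> i" using cK by (simp add: K_def K0_ipow)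
    then show ?thesis using Aff_ipow_trans_one[of "zeta k - 1" i] z1 by (simp add: K_def cval)
  qed
  have pa: "a [^]\<^bsub>H\<^esub> (i::int) = \<one>\<^bsub>H\<^esub> \<longleftrightarrow> int k dvd i" for i
    using H.int_pow_eq_id[OF aH] by (simp add: k_def)
  define u1 where "u1 = (a, \<one>\<^bsub>K\<^esub>)"
  define v1 where "v1 = (\<one>\<^bsub>H\<^esub>, \<rho>)"
  define u2 where "u2 = (\<one>\<^bsub>H\<^esub>, c)"
  define v2 where "v2 = (b, c)"
  have inP: "u1 \<in> carrier P" "v1 \<in> carrier P" "u2 \<in> carrier P" "v2 \<in> carrier P"
    using aH bH \<rho>K cK by (simp_all add: u1_def v1_def u2_def v2_def P_def)
  have pu1: "u1 [^]\<^bsub>P\<^esub> (i::int) = \<one>\<^bsub>P\<^esub> \<longleftrightarrow> int k dvd i" for i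
    unfolding u1_def P_def using DirProd_ipow_one[OF gH gK aH K1, of i] pa[of i] k1pow[of i] by simp
  have pv1: "v1 [^]\<^bsub>P\<^esub> (i::int) = \<one>\<^bsub>P\<^esub> \<longleftrightarrow> int k dvd i" for i
    unfolding v1_def P_def using DirProd_ipow_one[OF gH gK _ \<rho>K, of "\<one>\<^bsub>H\<^esub>" i] p\<rho>[of i] h1pow[of i] by simp
  have pu2: "u2 [^]\<^bsub>P\<^esub> (i::int) = \<one>\<^bsub>P\<^esub> \<longleftrightarrow> i = 0" for i
    unfolding u2_def P_def using DirProd_ipow_one[OF gH gK _ cK, of "\<one>\<^bsub>H\<^esub>" i] pc[of i] h1pow[of i] by simp
  have pv2: "v2 [^]\<^bsub>P\<^esub> (i::int) = \<one>\<^bsub>P\<^esub> \<longleftrightarrow> i = 0" for i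
    unfolding v2_def P_def using DirProd_ipow_one[OF gH gK bH cK, of i] pc[of i] by auto
  have Hinf: "infinite (carrier H)" using Npos_infinite by (simp add: H_def)
  have Kinf: "infinite (carrier K)" by (simp add: K_def K0_infinite)
  have iu1: "infinite (P.orb u1 ` carrier P)"
    unfolding u1_def P_def by (rule orbits_inf2[OF gH gK aH K1]) (use Kinf in simp_all)
  have iv1: "infinite (P.orb v1 ` carrier P)"
    unfolding v1_def P_def by (rule orbits_inf1[OF gH gK _ \<rho>K]) (use Hinf in simp_all)
  have iu2: "infinite (P.orb u2 ` carrier P)"
    unfolding u2_def P_def by (rule orbits_inf1[OF gH gK _ cK]) (use Hinf in simp_all)
  have iv2: "infinite (P.orb v2 ` carrier P)"
    unfolding v2_def P_def by (rule orbits_inf1[OF gH gK bH cK]) (use Hinf pc in simp_all)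
  have Prs: "\<And>u v. (u, v) \<in> {(u1, v1), (u2, v2)} \<Longrightarrow> u \<in> carrier P \<and> v \<in> carrier P \<and>
        (\<forall>i::int. u [^]\<^bsub>P\<^esub> i = \<one>\<^bsub>P\<^esub> \<longleftrightarrow> v [^]\<^bsub>P\<^esub> i = \<one>\<^bsub>P\<^esub>) \<and>
        infinite (P.orb u ` carrier P) \<and> infinite (P.orb v ` carrier P)"
    using inP pu1 pv1 pu2 pv2 iu1 iv1 iu2 iv2 by auto
  obtain Q :: "((nat \<times> (complex \<times> complex)) \<Rightarrow> (nat \<times> (complex \<times> complex))) monoid" and \<Lambda>
    where Q: "group Q" "countable (carrier Q)" "\<Lambda> \<in> hom P Q" "inj_on \<Lambda> (carrier P)"
      "\<forall>u' v'. (u', v') \<in> {(u1, v1), (u2, v2)} \<longrightarrow> (\<exists>g\<in>carrier Q. g \<otimes>\<^bsub>Q\<^esub> \<Lambda> u' \<otimes>\<^bsub>Q\<^esub> inv\<^bsub>Q\<^esub> g = \<Lambda> v')"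
    using perm_ext[OF gP cP, of "{(u1, v1), (u2, v2)}"] Prs by auto
  interpret Q: group Q by (rule Q(1))
  interpret L: group_hom P Q \<Lambda> using gP Q(1,3) by (simp add: group_hom_def group_hom_axioms_def)
  obtain g0 where g0: "g0 \<in> carrier Q" "g0 \<otimes>\<^bsub>Q\<^esub> \<Lambda> u1 \<otimes>\<^bsub>Q\<^esub> inv\<^bsub>Q\<^esub> g0 = \<Lambda> v1" using Q(5) by blast
  obtain g1 where g1: "g1 \<in> carrier Q" "g1 \<otimes>\<^bsub>Q\<^esub> \<Lambda> u2 \<otimes>\<^bsub>Q\<^esub> inv\<^bsub>Q\<^esub> g1 = \<Lambda> v2" using Q(5) by blast
  define j where "j = (\<lambda>n. \<Lambda> (n, \<one>\<^bsub>K\<^esub>))"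
  have inP2: "(n, \<one>\<^bsub>K\<^esub>) \<in> carrier P" if "n \<in> Npos" for n using that by (simp add: P_def H_def)
  have jhom: "j \<in> hom (tbl_grp A) Q"
  proof (rule homI)
    fix n assume "n \<in> carrier (tbl_grp A)" then show "j n \<in> carrier Q" using inP2 by (simp add: j_def)
  next
    fix n m assume nm: "n \<in> carrier (tbl_grp A)" "m \<in> carrier (tbl_grp A)"
    have "(n \<otimes>\<^bsub>tbl_grp A\<^esub> m, \<one>\<^bsub>K\<^esub>) = (n, \<one>\<^bsub>K\<^esub>) \<otimes>\<^bsub>P\<^esub> (m, \<one>\<^bsub>K\<^esub>)"
      by (simp add: P_def H_def)
    then show "j (n \<otimes>\<^bsub>tbl_grp A\<^esub> m) = j n \<otimes>\<^bsub>Q\<^esub> j m"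
      using nm inP2 by (simp add: j_def)
  qed
  have jinj: "inj_on j Npos"
  proof (rule inj_onI)
    fix n m assume "n \<in> Npos" "m \<in> Npos" "j n = j m"
    then show "n = m" using Q(4) inP2 unfolding j_def inj_on_def by blast
  qed
  define tP where "tP = (\<one>\<^bsub>H\<^esub>, T)"
  have tP: "tP \<in> carrier P" using TK by (simp add: tP_def P_def)
  define t where "t = \<Lambda> tP"
  have tQ: "t \<in> carrier Q" using tP by (simp add: t_def)
  have ja: "j a = \<Lambda> u1" by (simp add: j_def u1_def)
  define x1 where "x1 = g0 \<otimes>\<^bsub>Q\<^esub> j a \<otimes>\<^bsub>Q\<^esub> inv\<^bsub>Q\<^esub> g0"
  have x1: "x1 = \<Lambda> v1" using g0 by (simp add: x1_def ja)
  have x3: "x1 \<otimes>\<^bsub>Q\<^esub> (t \<otimes>\<^bsub>Q\<^esub> inv\<^bsub>Q\<^esub> x1 \<otimes>\<^bsub>Q\<^esub> inv\<^bsub>Q\<^esub> t) = \<Lambda> u2"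
  proof -
    have "x1 \<otimes>\<^bsub>Q\<^esub> (t \<otimes>\<^bsub>Q\<^esub> inv\<^bsub>Q\<^esub> x1 \<otimes>\<^bsub>Q\<^esub> inv\<^bsub>Q\<^esub> t) =
        \<Lambda> (v1 \<otimes>\<^bsub>P\<^esub> (tP \<otimes>\<^bsub>P\<^esub> inv\<^bsub>P\<^esub> v1 \<otimes>\<^bsub>P\<^esub> inv\<^bsub>P\<^esub> tP))"
      using inP tP by (simp add: x1 t_def L.hom_mult L.hom_inv)
    also have "v1 \<otimes>\<^bsub>P\<^esub> (tP \<otimes>\<^bsub>P\<^esub> inv\<^bsub>P\<^esub> v1 \<otimes>\<^bsub>P\<^esub> inv\<^bsub>P\<^esub> tP) = u2"
    proof -
      have "inv\<^bsub>P\<^esub> v1 = (\<one>\<^bsub>H\<^esub>, inv\<^bsub>K\<^esub> \<rho>)" unfolding P_def v1_def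
        using inv_DirProd[OF gH gK _ \<rho>K, of "\<one>\<^bsub>H\<^esub>"] by simp
      moreover have "inv\<^bsub>P\<^esub> tP = (\<one>\<^bsub>H\<^esub>, inv\<^bsub>K\<^esub> T)" unfolding P_def tP_def
        using inv_DirProd[OF gH gK _ TK, of "\<one>\<^bsub>H\<^esub>"] by simp
      ultimately show ?thesis using \<rho>K TK
        by (simp add: P_def v1_def tP_def u2_def c_def K.m_assoc)
    qed
    finally show ?thesis .
  qed
  have final: "(g1 \<otimes>\<^bsub>Q\<^esub> \<Lambda> u2 \<otimes>\<^bsub>Q\<^esub> inv\<^bsub>Q\<^esub> g1) \<otimes>\<^bsub>Q\<^esub> inv\<^bsub>Q\<^esub> (\<Lambda> u2) = j b"
  proof -
    have "(g1 \<otimes>\<^bsub>Q\<^esub> \<Lambda> u2 \<otimes>\<^bsub>Q\<^esub> inv\<^bsub>Q\<^esub> g1) \<otimes>\<^bsub>Q\<^esub> inv\<^bsub>Q\<^esub> (\<Lambda> u2) = \<Lambda> (v2 \<otimes>\<^bsub>P\<^esub> inv\<^bsub>P\<^esub> u2)"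
      using g1 inP by (simp add: L.hom_mult L.hom_inv)
    also have "v2 \<otimes>\<^bsub>P\<^esub> inv\<^bsub>P\<^esub> u2 = (b, \<one>\<^bsub>K\<^esub>)"
    proof -
      have "inv\<^bsub>P\<^esub> u2 = (\<one>\<^bsub>H\<^esub>, inv\<^bsub>K\<^esub> c)" unfolding P_def u2_def
        using inv_DirProd[OF gH gK _ cK, of "\<one>\<^bsub>H\<^esub>"] by simp
      then show ?thesis using bH cK by (simp add: P_def v2_def)
    qed
    finally show ?thesis by (simp add: j_def)
  qed
  have "j b = (g1 \<otimes>\<^bsub>Q\<^esub> (x1 \<otimes>\<^bsub>Q\<^esub> (t \<otimes>\<^bsub>Q\<^esub> inv\<^bsub>Q\<^esub> x1 \<otimes>\<^bsub>Q\<^esub> inv\<^bsub>Q\<^esub> t)) \<otimes>\<^bsub>Q\<^esub> inv\<^bsub>Q\<^esub> g1)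
          \<otimes>\<^bsub>Q\<^esub> inv\<^bsub>Q\<^esub> (x1 \<otimes>\<^bsub>Q\<^esub> (t \<otimes>\<^bsub>Q\<^esub> inv\<^bsub>Q\<^esub> x1 \<otimes>\<^bsub>Q\<^esub> inv\<^bsub>Q\<^esub> t))"
    unfolding x3 using final by simp
  then show ?thesis unfolding x1_def using Q(1,2) jhom jinj g0(1) g1(1) tQ by blast
qed

lemma (in group) centr_subgroup:
  assumes a: "a \<in> carrier G"
  shows "subgroup {g \<in> carrier G. a \<otimes> g = g \<otimes> a} G"
proof (rule subgroupI)
  show "{g \<in> carrier G. a \<otimes> g = g \<otimes> a} \<subseteq> carrier G" by blast
  show "{g \<in> carrier G. a \<otimes> g = g \<otimes> a} \<noteq> {}" using a by auto
next
  fix g assume g: "g \<in> {g \<in> carrier G. a \<otimes> g = g \<otimes> a}"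
  then have gc: "g \<in> carrier G" and ag: "a \<otimes> g = g \<otimes> a" by auto
  have "inv g \<otimes> a = inv g \<otimes> a \<otimes> (g \<otimes> inv g)" using gc a by simp
  also have "\<dots> = inv g \<otimes> (a \<otimes> g) \<otimes> inv g" using gc a by (simp add: m_assoc)
  also have "\<dots> = inv g \<otimes> (g \<otimes> a) \<otimes> inv g" using ag by simp
  also have "\<dots> = a \<otimes> inv g" using gc a by (simp add: m_assoc invL)
  finally show "inv g \<in> {g \<in> carrier G. a \<otimes> g = g \<otimes> a}" using gc by simp
next
  fix g h assume g: "g \<in> {g \<in> carrier G. a \<otimes> g = g \<otimes> a}" and h: "h \<in> {g \<in> carrier G. a \<otimes> g = g \<otimes> a}"
  then have gc: "g \<in> carrier G" "a \<otimes> g = g \<otimes> a" and hc: "h \<in> carrier G" "a \<otimes> h = h \<otimes> a" by auto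
  have "a \<otimes> (g \<otimes> h) = (a \<otimes> g) \<otimes> h" by (rule m_assoc[OF a gc(1) hc(1), symmetric])
  also have "\<dots> = (g \<otimes> a) \<otimes> h" using gc(2) by simp
  also have "\<dots> = g \<otimes> (a \<otimes> h)" by (rule m_assoc[OF gc(1) a hc(1)])
  also have "\<dots> = g \<otimes> (h \<otimes> a)" using hc(2) by simp
  also have "\<dots> = (g \<otimes> h) \<otimes> a" by (rule m_assoc[OF gc(1) hc(1) a, symmetric])
  finally have e: "a \<otimes> (g \<otimes> h) = (g \<otimes> h) \<otimes> a" .
  show "g \<otimes> h \<in> {g \<in> carrier G. a \<otimes> g = g \<otimes> a}" using e gc(1) hc(1) m_closed by blast
qed

lemma nd_FG:
  assumes S: "finite S" "S \<subseteq> Npos"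
  shows "nowhere_dense_in G_space {A \<in> group_tables. generate (tbl_grp A) S = Npos}"
proof (rule nd_crit)
  show "{A \<in> group_tables. generate (tbl_grp A) S = Npos} \<subseteq> group_tables" by blast
next
  fix A :: "nat \<times> nat \<Rightarrow> nat" and D :: "(nat \<times> nat) set"
  assume AG: "A \<in> group_tables" and D: "finite D"
  obtain Q :: "((nat \<times> (complex \<times> complex)) \<Rightarrow> (nat \<times> (complex \<times> complex))) monoid" and j x y z
    where Q: "group Q" "countable (carrier Q)" "j \<in> hom (tbl_grp A) Q" "inj_on j Npos"
      "x \<in> carrier Q" "y \<in> carrier Q"
      "\<forall>n\<in>Npos. x \<otimes>\<^bsub>Q\<^esub> j n = j n \<otimes>\<^bsub>Q\<^esub> x" "x \<otimes>\<^bsub>Q\<^esub> y \<noteq> y \<otimes>\<^bsub>Q\<^esub> x"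
    using lf_setup[OF AG] by blast
  interpret Q: group Q by (rule Q(1))
  obtain B l where B: "B \<in> group_tables" "\<forall>p\<in>D. B p = A p" "bij_betw l (carrier Q) Npos"
    "\<forall>n\<in>S. l (j n) = n" "\<forall>q1\<in>carrier Q. \<forall>q2\<in>carrier Q. B (l q1, l q2) = l (q1 \<otimes>\<^bsub>Q\<^esub> q2)"
    using extend[OF AG D Q(1,2,3,4) S] by blast
  have jc: "j n \<in> carrier Q" if "n \<in> Npos" for n using Q(3) that by (auto simp: hom_def)
  have linj: "inj_on l (carrier Q)" using B(3) by (simp add: bij_betw_def)
  have lN: "l q \<in> Npos" if "q \<in> carrier Q" for q using B(3) that unfolding bij_betw_def by blast
  define D' where "D' = (\<lambda>s. (l x, s)) ` S \<union> (\<lambda>s. (s, l x)) ` S \<union> {(l x, l y), (l y, l x)}"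
  have fD': "finite D'" using S(1) by (simp add: D'_def)
  have "\<forall>C\<in>group_tables. (\<forall>p\<in>D'. C p = B p) \<longrightarrow> C \<notin> {A \<in> group_tables. generate (tbl_grp A) S = Npos}"
  proof (intro ballI impI)
    fix C assume CG: "C \<in> group_tables" and agree: "\<forall>p\<in>D'. C p = B p"
    interpret G: group "tbl_grp C" using CG by (simp add: group_tables_def)
    have cs: "C (l x, s) = C (s, l x)" if s: "s \<in> S" for s
    proof -
      have sN: "s \<in> Npos" using s S(2) by blast
      have "C (l x, s) = B (l x, s)" using agree s by (auto simp: D'_def)
      also have "\<dots> = B (l x, l (j s))" using B(4) s by simp
      also have "\<dots> = l (x \<otimes>\<^bsub>Q\<^esub> j s)" using B(5) Q(5) jc[OF sN] by simp
      also have "\<dots> = l (j s \<otimes>\<^bsub>Q\<^esub> x)" using Q(7) sN by simp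
      also have "\<dots> = B (l (j s), l x)" using B(5) Q(5) jc[OF sN] by simp
      also have "\<dots> = B (s, l x)" using B(4) s by simp
      also have "\<dots> = C (s, l x)" using agree s by (auto simp: D'_def)
      finally show ?thesis .
    qed
    have cxy: "C (l x, l y) \<noteq> C (l y, l x)"
    proof -
      have "C (l x, l y) = l (x \<otimes>\<^bsub>Q\<^esub> y)" using agree B(5) Q(5,6) by (simp add: D'_def)
      moreover have "C (l y, l x) = l (y \<otimes>\<^bsub>Q\<^esub> x)" using agree B(5) Q(5,6) by (simp add: D'_def)
      moreover have "l (x \<otimes>\<^bsub>Q\<^esub> y) \<noteq> l (y \<otimes>\<^bsub>Q\<^esub> x)"
        using Q(5,6,8) linj unfolding inj_on_def by (meson Q.m_closed)
      ultimately show ?thesis by simp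
    qed
    have lxN: "l x \<in> Npos" and lyN: "l y \<in> Npos" using lN Q(5,6) by auto
    define Z where "Z = {g \<in> carrier (tbl_grp C). l x \<otimes>\<^bsub>tbl_grp C\<^esub> g = g \<otimes>\<^bsub>tbl_grp C\<^esub> l x}"
    have Zs: "subgroup Z (tbl_grp C)" unfolding Z_def by (rule G.centr_subgroup) (use lxN in simp)
    have "S \<subseteq> Z" using cs S(2) by (auto simp: Z_def)
    then have "generate (tbl_grp C) S \<subseteq> Z" using Zs by (rule G.generate_subgroup_incl)
    moreover have "l y \<notin> Z" using cxy by (simp add: Z_def)
    ultimately have "generate (tbl_grp C) S \<noteq> Npos" using lyN by blast
    then show "C \<notin> {A \<in> group_tables. generate (tbl_grp A) S = Npos}" by simp
  qed
  then show "\<exists>B D'. B \<in> group_tables \<and> (\<forall>p\<in>D. B p = A p) \<and> finite D' \<and>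
       (\<forall>C\<in>group_tables. (\<forall>p\<in>D'. C p = B p) \<longrightarrow> C \<notin> {A \<in> group_tables. generate (tbl_grp A) S = Npos})"
    using B(1,2) fD' by blast
qed


lemma nd_LF: "nowhere_dense_in G_space {A \<in> group_tables. locally_finite_grp (tbl_grp A)}"
proof (rule nd_crit)
  show "{A \<in> group_tables. locally_finite_grp (tbl_grp A)} \<subseteq> group_tables" by blast
next
  fix A :: "nat \<times> nat \<Rightarrow> nat" and D :: "(nat \<times> nat) set"
  assume AG: "A \<in> group_tables" and D: "finite D"
  obtain Q :: "((nat \<times> (complex \<times> complex)) \<Rightarrow> (nat \<times> (complex \<times> complex))) monoid" and j x y z
    where Q: "group Q" "countable (carrier Q)" "j \<in> hom (tbl_grp A) Q" "inj_on j Npos"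
      "x \<in> carrier Q" "y \<in> carrier Q" "z \<in> carrier Q"
      "x \<otimes>\<^bsub>Q\<^esub> y = (y \<otimes>\<^bsub>Q\<^esub> y) \<otimes>\<^bsub>Q\<^esub> x" "y \<otimes>\<^bsub>Q\<^esub> z = z \<otimes>\<^bsub>Q\<^esub> x" "y \<noteq> \<one>\<^bsub>Q\<^esub>"
    using lf_setup[OF AG] by blast
  interpret Q: group Q by (rule Q(1))
  obtain B l where B: "B \<in> group_tables" "\<forall>p\<in>D. B p = A p" "bij_betw l (carrier Q) Npos"
    "l \<one>\<^bsub>Q\<^esub> = 1" "\<forall>q1\<in>carrier Q. \<forall>q2\<in>carrier Q. B (l q1, l q2) = l (q1 \<otimes>\<^bsub>Q\<^esub> q2)"
    using extend[OF AG D Q(1,2,3,4), of "{}"] by auto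
  have linj: "inj_on l (carrier Q)" using B(3) by (simp add: bij_betw_def)
  have lN: "l q \<in> Npos" if "q \<in> carrier Q" for q using B(3) that unfolding bij_betw_def by blast
  have yy: "y \<otimes>\<^bsub>Q\<^esub> y \<in> carrier Q" using Q(6) by simp
  define D' where "D' = {(l x, l y), (l y, l y), (l (y \<otimes>\<^bsub>Q\<^esub> y), l x), (l y, l z), (l z, l x)}"
  have fD': "finite D'" by (simp add: D'_def)
  have "\<forall>C\<in>group_tables. (\<forall>p\<in>D'. C p = B p) \<longrightarrow> C \<notin> {A \<in> group_tables. locally_finite_grp (tbl_grp A)}"
  proof (intro ballI impI)
    fix C assume CG: "C \<in> group_tables" and agree: "\<forall>p\<in>D'. C p = B p"
    interpret G: group "tbl_grp C" using CG by (simp add: group_tables_def)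
    have e1: "C (l x, l y) = l (x \<otimes>\<^bsub>Q\<^esub> y)" using agree B(5) Q(5,6) by (simp add: D'_def)
    have e2: "C (l y, l y) = l (y \<otimes>\<^bsub>Q\<^esub> y)" using agree B(5) Q(6) by (simp add: D'_def)
    have e3: "C (l (y \<otimes>\<^bsub>Q\<^esub> y), l x) = l ((y \<otimes>\<^bsub>Q\<^esub> y) \<otimes>\<^bsub>Q\<^esub> x)" using agree B(5) Q(5) yy by (simp add: D'_def)
    have e4: "C (l y, l z) = l (y \<otimes>\<^bsub>Q\<^esub> z)" using agree B(5) Q(6,7) by (simp add: D'_def)
    have e5: "C (l z, l x) = l (z \<otimes>\<^bsub>Q\<^esub> x)" using agree B(5) Q(5,7) by (simp add: D'_def)
    have r1: "C (l x, l y) = C (C (l y, l y), l x)" using e1 e2 e3 Q(8) by simp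
    have r2: "C (l y, l z) = C (l z, l x)" using e4 e5 Q(9) by simp
    have y1: "l y \<noteq> 1"
    proof
      assume "l y = 1"
      then have "l y = l \<one>\<^bsub>Q\<^esub>" using B(4) by simp
      then have "y = \<one>\<^bsub>Q\<^esub>" using linj Q(6) unfolding inj_on_def by blast
      then show False using Q(10) by simp
    qed
    have xyzN: "l x \<in> Npos" "l y \<in> Npos" "l z \<in> Npos" using lN Q(5,6,7) by auto
    show "C \<notin> {A \<in> group_tables. locally_finite_grp (tbl_grp A)}"
    proof
      assume "C \<in> {A \<in> group_tables. locally_finite_grp (tbl_grp A)}"
      then have lf: "locally_finite_grp (tbl_grp C)" by simp
      have "finite (generate (tbl_grp C) {l y})"
        using lf xyzN unfolding locally_finite_grp_def by simp
      then have o: "G.ord (l y) \<noteq> 0" by (rule G.finite_generate_ord[rotated]) (use xyzN in simp)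
      show False
        by (rule G.no_torsion_cert[of "l x" "l y" "l z"]) (use xyzN r1 r2 y1 o in simp_all)
    qed
  qed
  then show "\<exists>B D'. B \<in> group_tables \<and> (\<forall>p\<in>D. B p = A p) \<and> finite D' \<and>
       (\<forall>C\<in>group_tables. (\<forall>p\<in>D'. C p = B p) \<longrightarrow> C \<notin> {A \<in> group_tables. locally_finite_grp (tbl_grp A)})"
    using B(1,2) fD' by blast
qed


lemma nd_simp:
  assumes a: "a \<in> Npos" "a \<noteq> 1" and b: "b \<in> Npos"
  shows "nowhere_dense_in G_space {A \<in> group_tables. \<exists>N. N \<lhd> tbl_grp A \<and> a \<in> N \<and> b \<notin> N}"
proof (rule nd_crit)
  show "{A \<in> group_tables. \<exists>N. N \<lhd> tbl_grp A \<and> a \<in> N \<and> b \<notin> N} \<subseteq> group_tables" by blast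
next
  fix A :: "nat \<times> nat \<Rightarrow> nat" and D :: "(nat \<times> nat) set"
  assume AG: "A \<in> group_tables" and D: "finite D"
  obtain Q :: "((nat \<times> (complex \<times> complex)) \<Rightarrow> (nat \<times> (complex \<times> complex))) monoid" and j g0 g1 t
    where Q: "group Q" "countable (carrier Q)" "j \<in> hom (tbl_grp A) Q" "inj_on j Npos"
      "g0 \<in> carrier Q" "g1 \<in> carrier Q" "t \<in> carrier Q"
      and eq: "j b = (g1 \<otimes>\<^bsub>Q\<^esub> ((g0 \<otimes>\<^bsub>Q\<^esub> j a \<otimes>\<^bsub>Q\<^esub> inv\<^bsub>Q\<^esub> g0) \<otimes>\<^bsub>Q\<^esub>
             (t \<otimes>\<^bsub>Q\<^esub> inv\<^bsub>Q\<^esub> (g0 \<otimes>\<^bsub>Q\<^esub> j a \<otimes>\<^bsub>Q\<^esub> inv\<^bsub>Q\<^esub> g0) \<otimes>\<^bsub>Q\<^esub> inv\<^bsub>Q\<^esub> t))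
           \<otimes>\<^bsub>Q\<^esub> inv\<^bsub>Q\<^esub> g1)
          \<otimes>\<^bsub>Q\<^esub> inv\<^bsub>Q\<^esub> ((g0 \<otimes>\<^bsub>Q\<^esub> j a \<otimes>\<^bsub>Q\<^esub> inv\<^bsub>Q\<^esub> g0) \<otimes>\<^bsub>Q\<^esub>
             (t \<otimes>\<^bsub>Q\<^esub> inv\<^bsub>Q\<^esub> (g0 \<otimes>\<^bsub>Q\<^esub> j a \<otimes>\<^bsub>Q\<^esub> inv\<^bsub>Q\<^esub> g0) \<otimes>\<^bsub>Q\<^esub> inv\<^bsub>Q\<^esub> t))"
    using simp_setup[OF AG a b] by blast
  interpret Q: group Q by (rule Q(1))
  have S0: "finite {a, b}" "{a, b} \<subseteq> Npos" using a b by auto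
  obtain B l where B: "B \<in> group_tables" "\<forall>p\<in>D. B p = A p" "bij_betw l (carrier Q) Npos"
    "\<forall>n\<in>{a, b}. l (j n) = n" "l \<one>\<^bsub>Q\<^esub> = 1"
    "\<forall>q1\<in>carrier Q. \<forall>q2\<in>carrier Q. B (l q1, l q2) = l (q1 \<otimes>\<^bsub>Q\<^esub> q2)"
    using extend[OF AG D Q(1,2,3,4) S0] by blast
  have lN: "l q \<in> Npos" if "q \<in> carrier Q" for q using B(3) that unfolding bij_betw_def by blast
  have jc: "j n \<in> carrier Q" if "n \<in> Npos" for n using Q(3) that by (auto simp: hom_def)
  define \<alpha> where "\<alpha> = j a"
  define x1 where "x1 = g0 \<otimes>\<^bsub>Q\<^esub> \<alpha> \<otimes>\<^bsub>Q\<^esub> inv\<^bsub>Q\<^esub> g0"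
  define ix1 where "ix1 = inv\<^bsub>Q\<^esub> x1"
  define x2 where "x2 = t \<otimes>\<^bsub>Q\<^esub> ix1 \<otimes>\<^bsub>Q\<^esub> inv\<^bsub>Q\<^esub> t"
  define x3 where "x3 = x1 \<otimes>\<^bsub>Q\<^esub> x2"
  define x4 where "x4 = g1 \<otimes>\<^bsub>Q\<^esub> x3 \<otimes>\<^bsub>Q\<^esub> inv\<^bsub>Q\<^esub> g1"
  define ix3 where "ix3 = inv\<^bsub>Q\<^esub> x3"
  have \<alpha>c: "\<alpha> \<in> carrier Q" using jc a by (simp add: \<alpha>_def)
  have cs: "x1 \<in> carrier Q" "ix1 \<in> carrier Q" "x2 \<in> carrier Q" "x3 \<in> carrier Q" "x4 \<in> carrier Q" "ix3 \<in> carrier Q"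
    using Q(5,6,7) \<alpha>c by (simp_all add: x1_def ix1_def x2_def x3_def x4_def ix3_def)
  have jb: "j b = x4 \<otimes>\<^bsub>Q\<^esub> ix3"
    using eq by (simp add: x1_def ix1_def x2_def x3_def x4_def ix3_def \<alpha>_def)
  define W where "W = {(g0, \<alpha>), (g0 \<otimes>\<^bsub>Q\<^esub> \<alpha>, inv\<^bsub>Q\<^esub> g0), (g0, inv\<^bsub>Q\<^esub> g0),
     (x1, ix1), (t, ix1), (t \<otimes>\<^bsub>Q\<^esub> ix1, inv\<^bsub>Q\<^esub> t), (t, inv\<^bsub>Q\<^esub> t), (x1, x2),
     (g1, x3), (g1 \<otimes>\<^bsub>Q\<^esub> x3, inv\<^bsub>Q\<^esub> g1), (g1, inv\<^bsub>Q\<^esub> g1), (x3, ix3), (x4, ix3)}"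
  have Wc: "W \<subseteq> carrier Q \<times> carrier Q"
    using Q(5,6,7) \<alpha>c cs by (auto simp: W_def)
  define D' where "D' = (\<lambda>(p, q). (l p, l q)) ` W"
  have fD': "finite D'" by (simp add: D'_def W_def)
  define T where "T = {A \<in> group_tables. \<exists>N. N \<lhd> tbl_grp A \<and> a \<in> N \<and> b \<notin> N}"
  have "\<forall>C\<in>group_tables. (\<forall>p\<in>D'. C p = B p) \<longrightarrow> C \<notin> T"
  proof (intro ballI impI)
    fix C assume CG: "C \<in> group_tables" and agree: "\<forall>p\<in>D'. C p = B p"
    have hW: "C (l p, l q) = l (p \<otimes>\<^bsub>Q\<^esub> q)" if pq: "(p, q) \<in> W" for p q
    proof -
      have "(l p, l q) \<in> D'" using pq by (force simp: D'_def)
      then have "C (l p, l q) = B (l p, l q)" using agree by blast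
      also have "\<dots> = l (p \<otimes>\<^bsub>Q\<^esub> q)" using B(6) Wc pq by blast
      finally show ?thesis .
    qed
    show "C \<notin> T"
    proof
      assume "C \<in> T"
      then obtain N where N: "N \<lhd> tbl_grp C" "a \<in> N" "b \<notin> N" by (auto simp: T_def)
      have la: "l \<alpha> \<in> N" using B(4) N(2) by (simp add: \<alpha>_def)
      have s1: "l x1 \<in> N" unfolding x1_def
        by (rule cert_conj[where C=C and N=N and Q=Q and l=l])
          ((rule hW, simp add: W_def ix1_def ix3_def) | fact)+
      have s2: "l ix1 \<in> N" unfolding ix1_def
        by (rule cert_inv[where C=C and N=N and Q=Q and l=l])
          ((rule hW, simp add: W_def ix1_def ix3_def) | fact)+
      have s3: "l x2 \<in> N" unfolding x2_def
        by (rule cert_conj[where C=C and N=N and Q=Q and l=l])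
          ((rule hW, simp add: W_def ix1_def ix3_def) | fact)+
      have s4: "l x3 \<in> N" unfolding x3_def
        by (rule cert_mult[where C=C and N=N and Q=Q and l=l])
          ((rule hW, simp add: W_def ix1_def ix3_def) | fact)+
      have s5: "l x4 \<in> N" unfolding x4_def
        by (rule cert_conj[where C=C and N=N and Q=Q and l=l])
          ((rule hW, simp add: W_def ix1_def ix3_def) | fact)+
      have s6: "l ix3 \<in> N" unfolding ix3_def
        by (rule cert_inv[where C=C and N=N and Q=Q and l=l])
          ((rule hW, simp add: W_def ix1_def ix3_def) | fact)+
      have s7: "l (x4 \<otimes>\<^bsub>Q\<^esub> ix3) \<in> N"
        by (rule cert_mult[where C=C and N=N and Q=Q and l=l])
          ((rule hW, simp add: W_def ix1_def ix3_def) | fact)+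
      have "l (j b) = b" using B(4) by simp
      then show False using s7 jb N(3) by simp
    qed
  qed
  then show "\<exists>B D'. B \<in> group_tables \<and> (\<forall>p\<in>D. B p = A p) \<and> finite D' \<and>
       (\<forall>C\<in>group_tables. (\<forall>p\<in>D'. C p = B p) \<longrightarrow> C \<notin> {A \<in> group_tables. \<exists>N. N \<lhd> tbl_grp A \<and> a \<in> N \<and> b \<notin> N})"
    using B(1,2) fD' unfolding T_def by blast
qed


theorem corollary6p3:
  shows "comeager_in G_space
           {A \<in> group_tables. simple_grp (tbl_grp A) \<and>
              \<not> finitely_generated_grp (tbl_grp A) \<and> \<not> locally_finite_grp (tbl_grp A)}"
proof -
  define Good where "Good = {A \<in> group_tables. simple_grp (tbl_grp A) \<and>
              \<not> finitely_generated_grp (tbl_grp A) \<and> \<not> locally_finite_grp (tbl_grp A)}"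
  define TF where "TF = (\<lambda>S. {A \<in> group_tables. generate (tbl_grp A) S = Npos})"
  define TL where "TL = {A \<in> group_tables. locally_finite_grp (tbl_grp A)}"
  define TS where "TS = (\<lambda>(a, b). {A \<in> group_tables. \<exists>N. N \<lhd> tbl_grp A \<and> a \<in> N \<and> b \<notin> N})"
  define Fam where "Fam = TF ` {S. finite S \<and> S \<subseteq> Npos} \<union> {TL} \<union> TS ` ((Npos - {1}) \<times> Npos)"
  have cF: "countable Fam"
    unfolding Fam_def
    by (intro countable_Un countable_image countable_Collect_finite_subset) (auto intro: countable_SIGMA)
  have ndF: "\<forall>T\<in>Fam. nowhere_dense_in G_space T"
  proof
    fix T assume "T \<in> Fam"
    then consider (f) S where "finite S" "S \<subseteq> Npos" "T = TF S" | (l) "T = TL"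
      | (s) a b where "a \<in> Npos" "a \<noteq> 1" "b \<in> Npos" "T = TS (a, b)"
      unfolding Fam_def by auto
    then show "nowhere_dense_in G_space T"
    proof cases
      case f then show ?thesis using nd_FG by (simp add: TF_def)
    next
      case l then show ?thesis using nd_LF by (simp add: TL_def)
    next
      case s then show ?thesis using nd_simp by (simp add: TS_def)
    qed
  qed
  have cover: "topspace G_space - Good \<subseteq> \<Union>Fam"
  proof
    fix A assume A: "A \<in> topspace G_space - Good"
    then have AG: "A \<in> group_tables" using topspace_G by simp
    interpret G: group "tbl_grp A" using AG by (simp add: group_tables_def)
    have nG: "\<not> (simple_grp (tbl_grp A) \<and> \<not> finitely_generated_grp (tbl_grp A) \<and> \<not> locally_finite_grp (tbl_grp A))"
      using A AG by (simp add: Good_def)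
    show "A \<in> \<Union>Fam"
    proof (cases "simple_grp (tbl_grp A)")
      case False
      have "carrier (tbl_grp A) \<noteq> {\<one>\<^bsub>tbl_grp A\<^esub>}"
      proof
        assume "carrier (tbl_grp A) = {\<one>\<^bsub>tbl_grp A\<^esub>}"
        then have "Npos = {1}" by simp
        moreover have "(2::nat) \<in> Npos" by (simp add: Npos_def)
        ultimately have "(2::nat) \<in> {1}" by simp
        then show False by simp
      qed
      then obtain N where N: "N \<lhd> tbl_grp A" "N \<noteq> {1}" "N \<noteq> Npos"
        using False unfolding simple_grp_def by auto
      have sN: "subgroup N (tbl_grp A)" using N(1) by (rule normal_imp_subgroup)
      have NN: "N \<subseteq> Npos" using subgroup.subset[OF sN] by simp
      have N1: "1 \<in> N" using subgroup.one_closed[OF sN] by simp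
      obtain a where a: "a \<in> N" "a \<noteq> 1" using N(2) N1 by blast
      obtain b where b: "b \<in> Npos" "b \<notin> N" using N(3) NN by blast
      have "A \<in> TS (a, b)" using AG N(1) a b by (auto simp: TS_def)
      moreover have "(a, b) \<in> (Npos - {1}) \<times> Npos" using a b NN by auto
      ultimately have "TS (a, b) \<in> Fam" unfolding Fam_def by (intro UnI2 imageI)
      then show ?thesis using \<open>A \<in> TS (a, b)\<close> by (rule UnionI)
    next
      case True
      then have "finitely_generated_grp (tbl_grp A) \<or> locally_finite_grp (tbl_grp A)" using nG by blast
      then show ?thesis
      proof
        assume "finitely_generated_grp (tbl_grp A)"
        then obtain S where S: "finite S" "S \<subseteq> Npos" "generate (tbl_grp A) S = Npos"
          unfolding finitely_generated_grp_def by auto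
        then have "A \<in> TF S" using AG by (simp add: TF_def)
        moreover have "TF S \<in> Fam" using S(1,2) unfolding Fam_def by (intro UnI1 imageI) simp
        ultimately show ?thesis by (intro UnionI)
      next
        assume "locally_finite_grp (tbl_grp A)"
        then have "A \<in> TL" using AG by (simp add: TL_def)
        moreover have "TL \<in> Fam" unfolding Fam_def by blast
        ultimately show ?thesis by (intro UnionI)
      qed
    qed
  qed
  have "Good \<subseteq> topspace G_space" using topspace_G by (auto simp: Good_def)
  moreover have "meager_in G_space (topspace G_space - Good)"
    unfolding meager_in_def using cF ndF cover by blast
  ultimately show ?thesis unfolding comeager_in_def Good_def by blast
qed

end
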